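(* Let $f:A\to B$ be a ring homomorphism, $\mathfrak b$ an ideal of $B$, and $A\bowtie^f\mathfrak b:=\{(a,f(a)+b): a\in A,\ b\in\mathfrak b\}\subseteq A\times B$. For a maximal ideal $\mathfrak m$ of $A$ let $S_{\mathfrak m}:=f(A\setminus\mathfrak m)+\mathfrak b$, $\mathfrak b_{S_{\mathfrak m}}:=\mathfrak bB_{S_{\mathfrak m}}$, and $f_{\mathfrak m}:A_{\mathfrak m}\to B_{S_{\mathfrak m}}$ the ring homomorphism induced by $f$ ($a/s\mapsto f(a)/f(s)$). Assume that for every maximal ideal $\mathfrak m$ of $A$ containing $f^{-1}(\mathfrak b)$, either $f_{\mathfrak m}$ is surjective or $f^{-1}(\mathfrak b)A_{\mathfrak m}\neq\{0\}$. Then the following are equivalent: (i) $A\bowtie^f\mathfrak b$ is an arithmetical ring; (ii) $A$ is an arithmetical ring, $\mathfrak b_{S_{\mathfrak m}}=\{0\}$ for every maximal ideal $\mathfrak m$ of $A$ containing $f^{-1}(\mathfrak b)$, and for every maximal ideal $\mathfrak n$ of $B$ not containing $\mathfrak b$ the set of all ideals of $B_{\mathfrak n}$ is totally ordered by inclusion.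
   Context: All rings are commutative with identity. $S_{\mathfrak m}$ is a multiplicative subset of $B$ and $B_{S_{\mathfrak m}}$ the localization (possibly zero). A ring is arithmetical if every finitely generated ideal is locally principal. *)

theory Defs
  imports "HOL-Algebra.Algebra"
begin

text \<open>Fractions x/s (x in R, s in S) modulo the usual relation
  x/s = y/t iff u(xt - ys) = 0 for some u in S.  The localization may be the zero ring.\<close>

definition loc_frac :: "('a, 'm) ring_scheme \<Rightarrow> 'a set \<Rightarrow> 'a \<Rightarrow> 'a \<Rightarrow> ('a \<times> 'a) set" where
  "loc_frac R S x s = {(y, t). y \<in> carrier R \<and> t \<in> S \<and>
      (\<exists>u\<in>S. u \<otimes>\<^bsub>R\<^esub> (a_minus R (x \<otimes>\<^bsub>R\<^esub> t) (y \<otimes>\<^bsub>R\<^esub> s)) = \<zero>\<^bsub>R\<^esub>)}"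

definition loc_rep :: "('a \<times> 'a) set \<Rightarrow> 'a \<times> 'a" where
  "loc_rep U = (SOME p. p \<in> U)"

definition localization :: "('a, 'm) ring_scheme \<Rightarrow> 'a set \<Rightarrow> (('a \<times> 'a) set) ring" where
  "localization R S =
     \<lparr> carrier = {loc_frac R S x s | x s. x \<in> carrier R \<and> s \<in> S},
       monoid.mult = (\<lambda>U V. loc_frac R S (fst (loc_rep U) \<otimes>\<^bsub>R\<^esub> fst (loc_rep V))
                                          (snd (loc_rep U) \<otimes>\<^bsub>R\<^esub> snd (loc_rep V))),
       one = loc_frac R S \<one>\<^bsub>R\<^esub> \<one>\<^bsub>R\<^esub>,
       ring.zero = loc_frac R S \<zero>\<^bsub>R\<^esub> \<one>\<^bsub>R\<^esub>,
       ring.add = (\<lambda>U V. loc_frac R S ((fst (loc_rep U) \<otimes>\<^bsub>R\<^esub> snd (loc_rep V)) \<oplus>\<^bsub>R\<^esub>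
                                   (fst (loc_rep V) \<otimes>\<^bsub>R\<^esub> snd (loc_rep U)))
                                  (snd (loc_rep U) \<otimes>\<^bsub>R\<^esub> snd (loc_rep V))) \<rparr>"

definition loc_can :: "('a, 'm) ring_scheme \<Rightarrow> 'a set \<Rightarrow> 'a \<Rightarrow> ('a \<times> 'a) set" where
  "loc_can R S x = loc_frac R S x \<one>\<^bsub>R\<^esub>"

definition loc_ext :: "('a, 'm) ring_scheme \<Rightarrow> 'a set \<Rightarrow> 'a set \<Rightarrow> (('a \<times> 'a) set) set" where
  "loc_ext R S I = genideal (localization R S) (loc_can R S ` I)"

abbreviation loc_at :: "('a, 'm) ring_scheme \<Rightarrow> 'a set \<Rightarrow> (('a \<times> 'a) set) ring" where
  "loc_at R P \<equiv> localization R (carrier R - P)"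

definition loc_map :: "('b, 'n) ring_scheme \<Rightarrow> 'b set \<Rightarrow> ('a \<Rightarrow> 'b) \<Rightarrow> ('a \<times> 'a) set \<Rightarrow> ('b \<times> 'b) set" where
  "loc_map B T f U = loc_frac B T (f (fst (loc_rep U))) (f (snd (loc_rep U)))"

definition fin_gen_ideal :: "'a set \<Rightarrow> ('a, 'm) ring_scheme \<Rightarrow> bool" where
  "fin_gen_ideal I R \<longleftrightarrow> ideal I R \<and> (\<exists>F. finite F \<and> F \<subseteq> carrier R \<and> I = genideal R F)"

definition locally_principal :: "'a set \<Rightarrow> ('a, 'm) ring_scheme \<Rightarrow> bool" where
  "locally_principal I R \<longleftrightarrow>
     (\<forall>M. maximalideal M R \<longrightarrow> principalideal (loc_ext R (carrier R - M) I) (loc_at R M))"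

definition arithmetical :: "('a, 'm) ring_scheme \<Rightarrow> bool" where
  "arithmetical R \<longleftrightarrow> cring R \<and> (\<forall>I. fin_gen_ideal I R \<longrightarrow> locally_principal I R)"

definition amalgamation :: "('a, 'm) ring_scheme \<Rightarrow> ('b, 'n) ring_scheme \<Rightarrow> ('a \<Rightarrow> 'b) \<Rightarrow> 'b set \<Rightarrow> ('a \<times> 'b) ring" where
  "amalgamation A B f J = (RDirProd A B)
     \<lparr> carrier := {(a, f a \<oplus>\<^bsub>B\<^esub> j) | a j. a \<in> carrier A \<and> j \<in> J} \<rparr>"

definition amal_S :: "('a, 'm) ring_scheme \<Rightarrow> ('b, 'n) ring_scheme \<Rightarrow> ('a \<Rightarrow> 'b) \<Rightarrow> 'b set \<Rightarrow> 'a set \<Rightarrow> 'b set" where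
  "amal_S A B f J M = {f s \<oplus>\<^bsub>B\<^esub> j | s j. s \<in> carrier A - M \<and> j \<in> J}"

end

theory Submission
  imports Defs
begin

definition chS :: "('a, 'm) ring_scheme \<Rightarrow> 'a set \<Rightarrow> bool" where
  "chS R S \<longleftrightarrow> (\<forall>a\<in>carrier R. \<forall>b\<in>carrier R. \<exists>s\<in>S. \<exists>x\<in>carrier R.
     s \<otimes>\<^bsub>R\<^esub> a = x \<otimes>\<^bsub>R\<^esub> b \<or> s \<otimes>\<^bsub>R\<^esub> b = x \<otimes>\<^bsub>R\<^esub> a)"

locale msub = cring R for R (structure) + fixes S
  assumes S_sub: "S \<subseteq> carrier R" and one_S: "\<one> \<in> S"
    and S_mult: "s \<in> S \<Longrightarrow> t \<in> S \<Longrightarrow> s \<otimes> t \<in> S"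
begin

abbreviation "fr \<equiv> loc_frac R S"
abbreviation "L \<equiv> localization R S"

lemma S_carr: "s \<in> S \<Longrightarrow> s \<in> carrier R" using S_sub by auto

lemma frac_mem: "(y, t) \<in> fr x s \<longleftrightarrow> y \<in> carrier R \<and> t \<in> S \<and> (\<exists>u\<in>S. u \<otimes> (x \<otimes> t \<ominus> y \<otimes> s) = \<zero>)"
  unfolding loc_frac_def by simp

lemma frac_refl: "x \<in> carrier R \<Longrightarrow> s \<in> S \<Longrightarrow> (x, s) \<in> fr x s"
  unfolding frac_mem using one_S S_carr by (auto intro!: bexI[of _ \<one>])

lemma frac_eq:
  assumes "x \<in> carrier R" "s \<in> S" "y \<in> carrier R" "t \<in> S"
  shows "fr x s = fr y t \<longleftrightarrow> (\<exists>u\<in>S. u \<otimes> (x \<otimes> t \<ominus> y \<otimes> s) = \<zero>)"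
proof
  assume "fr x s = fr y t"
  then have "(y, t) \<in> fr x s" using frac_refl assms by auto
  then show "\<exists>u\<in>S. u \<otimes> (x \<otimes> t \<ominus> y \<otimes> s) = \<zero>" unfolding frac_mem by auto
next
  assume "\<exists>u\<in>S. u \<otimes> (x \<otimes> t \<ominus> y \<otimes> s) = \<zero>"
  then obtain u where u: "u \<in> S" "u \<otimes> (x \<otimes> t \<ominus> y \<otimes> s) = \<zero>" by auto
  have uc: "u \<in> carrier R" using u S_carr by auto
  have sc: "s \<in> carrier R" "t \<in> carrier R" using assms S_carr by auto
  have sym: "u \<otimes> (y \<otimes> s \<ominus> x \<otimes> t) = \<zero>"
  proof -
    have "u \<otimes> (y \<otimes> s \<ominus> x \<otimes> t) = \<ominus> (u \<otimes> (x \<otimes> t \<ominus> y \<otimes> s))"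
      using uc sc assms by algebra
    then show ?thesis using u by simp
  qed
  have tr: "(z, r) \<in> fr c e" if h1: "(b, d) \<in> fr a p" and h2: "(z, r) \<in> fr b d"
    and cc: "a \<in> carrier R" "p \<in> S" and ee: "c = a" "e = p" for a p b d z r c e
  proof -
    from h1 obtain v where v: "v \<in> S" "v \<otimes> (a \<otimes> d \<ominus> b \<otimes> p) = \<zero>" "b \<in> carrier R" "d \<in> S"
      unfolding frac_mem by auto
    from h2 obtain w where w: "w \<in> S" "w \<otimes> (b \<otimes> r \<ominus> z \<otimes> d) = \<zero>" "z \<in> carrier R" "r \<in> S"
      unfolding frac_mem by auto
    have c: "v \<in> carrier R" "w \<in> carrier R" "d \<in> carrier R" "r \<in> carrier R" "p \<in> carrier R"
      using v w cc S_carr by auto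
    have "(v \<otimes> w \<otimes> d) \<otimes> (a \<otimes> r \<ominus> z \<otimes> p) =
          (w \<otimes> r) \<otimes> (v \<otimes> (a \<otimes> d \<ominus> b \<otimes> p)) \<oplus> (v \<otimes> p) \<otimes> (w \<otimes> (b \<otimes> r \<ominus> z \<otimes> d))"
      using c cc v(3) w(3) by algebra
    also have "\<dots> = \<zero>" using v w c by simp
    finally show ?thesis unfolding frac_mem ee using v w S_mult by auto
  qed
  have sym2: "(x, s) \<in> fr y t" unfolding frac_mem using assms u sym by auto
  have yt: "(y, t) \<in> fr x s" unfolding frac_mem using assms u by auto
  show "fr x s = fr y t"
  proof (rule subset_antisym; rule subsetI)
    fix q assume "q \<in> fr x s" then show "q \<in> fr y t"
      using tr[OF sym2, of "fst q" "snd q" y t] assms by auto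
  next
    fix q assume "q \<in> fr y t" then show "q \<in> fr x s"
      using tr[OF yt, of "fst q" "snd q" x s] assms by auto
  qed
qed

lemma fr_eqI:
  assumes "x \<in> carrier R" "s \<in> S" "y \<in> carrier R" "t \<in> S" "u \<in> S"
    "u \<otimes> (x \<otimes> t \<ominus> y \<otimes> s) = \<zero>"
  shows "fr x s = fr y t"
  using frac_eq assms by blast

lemma fr_eqI1:
  assumes "x \<in> carrier R" "s \<in> S" "y \<in> carrier R" "t \<in> S"
    "x \<otimes> t = y \<otimes> s"
  shows "fr x s = fr y t"
  apply (rule fr_eqI[OF assms(1-4) one_S])
  using assms S_carr by simp

lemma rep_mem:
  assumes "x \<in> carrier R" "s \<in> S"
  shows "loc_rep (fr x s) \<in> fr x s"
  unfolding loc_rep_def using frac_refl[OF assms] by (rule someI)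

lemma rep_props:
  assumes "x \<in> carrier R" "s \<in> S"
  shows "fst (loc_rep (fr x s)) \<in> carrier R" "snd (loc_rep (fr x s)) \<in> S"
    "fr (fst (loc_rep (fr x s))) (snd (loc_rep (fr x s))) = fr x s"
proof -
  obtain y t where yt: "loc_rep (fr x s) = (y, t)" by fastforce
  have m: "(y, t) \<in> fr x s" using rep_mem[OF assms] yt by simp
  then show "fst (loc_rep (fr x s)) \<in> carrier R" "snd (loc_rep (fr x s)) \<in> S"
    using yt unfolding frac_mem by auto
  from m have "fr x s = fr y t" using frac_eq[OF assms] unfolding frac_mem by auto
  then show "fr (fst (loc_rep (fr x s))) (snd (loc_rep (fr x s))) = fr x s" using yt by simp
qed

lemma L_carrier: "carrier L = {fr x s | x s. x \<in> carrier R \<and> s \<in> S}"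
  unfolding localization_def by simp

lemma fr_closed: "x \<in> carrier R \<Longrightarrow> s \<in> S \<Longrightarrow> fr x s \<in> carrier L"
  unfolding L_carrier by auto

lemma L_cases:
  assumes "U \<in> carrier L"
  obtains x s where "x \<in> carrier R" "s \<in> S" "U = fr x s"
  using assms unfolding L_carrier by auto

lemma L_zero: "\<zero>\<^bsub>L\<^esub> = fr \<zero> \<one>" unfolding localization_def by simp
lemma L_one: "\<one>\<^bsub>L\<^esub> = fr \<one> \<one>" unfolding localization_def by simp

lemma mult_compat:
  assumes c: "x \<in> carrier R" "s \<in> S" "y \<in> carrier R" "t \<in> S"
     "x' \<in> carrier R" "s' \<in> S" "y' \<in> carrier R" "t' \<in> S"
   and e1: "fr x' s' = fr x s" and e2: "fr y' t' = fr y t"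
  shows "fr (x' \<otimes> y') (s' \<otimes> t') = fr (x \<otimes> y) (s \<otimes> t)"
proof -
  obtain u where u: "u \<in> S" "u \<otimes> (x' \<otimes> s \<ominus> x \<otimes> s') = \<zero>" using e1 frac_eq c by blast
  obtain v where v: "v \<in> S" "v \<otimes> (y' \<otimes> t \<ominus> y \<otimes> t') = \<zero>" using e2 frac_eq c by blast
  have cc: "u \<in> carrier R" "v \<in> carrier R" "s \<in> carrier R" "t \<in> carrier R" "s' \<in> carrier R" "t' \<in> carrier R"
    using u v c S_carr by auto
  have "(u \<otimes> v) \<otimes> ((x' \<otimes> y') \<otimes> (s \<otimes> t) \<ominus> (x \<otimes> y) \<otimes> (s' \<otimes> t')) =
     (v \<otimes> y' \<otimes> t) \<otimes> (u \<otimes> (x' \<otimes> s \<ominus> x \<otimes> s')) \<oplus> (u \<otimes> x \<otimes> s') \<otimes> (v \<otimes> (y' \<otimes> t \<ominus> y \<otimes> t'))"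
    using cc c by algebra
  also have "\<dots> = \<zero>" using u v cc c by simp
  finally show ?thesis using c u v S_mult by (intro fr_eqI) auto
qed

lemma add_compat:
  assumes c: "x \<in> carrier R" "s \<in> S" "y \<in> carrier R" "t \<in> S"
     "x' \<in> carrier R" "s' \<in> S" "y' \<in> carrier R" "t' \<in> S"
   and e1: "fr x' s' = fr x s" and e2: "fr y' t' = fr y t"
  shows "fr (x' \<otimes> t' \<oplus> y' \<otimes> s') (s' \<otimes> t') = fr (x \<otimes> t \<oplus> y \<otimes> s) (s \<otimes> t)"
proof -
  obtain u where u: "u \<in> S" "u \<otimes> (x' \<otimes> s \<ominus> x \<otimes> s') = \<zero>" using e1 frac_eq c by blast
  obtain v where v: "v \<in> S" "v \<otimes> (y' \<otimes> t \<ominus> y \<otimes> t') = \<zero>" using e2 frac_eq c by blast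
  have cc: "u \<in> carrier R" "v \<in> carrier R" "s \<in> carrier R" "t \<in> carrier R" "s' \<in> carrier R" "t' \<in> carrier R"
    using u v c S_carr by auto
  have "(u \<otimes> v) \<otimes> ((x' \<otimes> t' \<oplus> y' \<otimes> s') \<otimes> (s \<otimes> t) \<ominus> (x \<otimes> t \<oplus> y \<otimes> s) \<otimes> (s' \<otimes> t')) =
     (v \<otimes> t \<otimes> t') \<otimes> (u \<otimes> (x' \<otimes> s \<ominus> x \<otimes> s')) \<oplus> (u \<otimes> s \<otimes> s') \<otimes> (v \<otimes> (y' \<otimes> t \<ominus> y \<otimes> t'))"
    using cc c by algebra
  also have "\<dots> = \<zero>" using u v cc c by simp
  finally show ?thesis using c cc u v S_mult by (intro fr_eqI) auto
qed

lemma L_mult: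
  assumes "x \<in> carrier R" "s \<in> S" "y \<in> carrier R" "t \<in> S"
  shows "fr x s \<otimes>\<^bsub>L\<^esub> fr y t = fr (x \<otimes> y) (s \<otimes> t)"
proof -
  have "fr x s \<otimes>\<^bsub>L\<^esub> fr y t = fr (fst (loc_rep (fr x s)) \<otimes> fst (loc_rep (fr y t)))
      (snd (loc_rep (fr x s)) \<otimes> snd (loc_rep (fr y t)))"
    unfolding localization_def by simp
  also have "\<dots> = fr (x \<otimes> y) (s \<otimes> t)"
    by (rule mult_compat) (use assms rep_props in auto)
  finally show ?thesis .
qed

lemma L_add:
  assumes "x \<in> carrier R" "s \<in> S" "y \<in> carrier R" "t \<in> S"
  shows "fr x s \<oplus>\<^bsub>L\<^esub> fr y t = fr (x \<otimes> t \<oplus> y \<otimes> s) (s \<otimes> t)"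
proof -
  have "fr x s \<oplus>\<^bsub>L\<^esub> fr y t = fr (fst (loc_rep (fr x s)) \<otimes> snd (loc_rep (fr y t)) \<oplus> fst (loc_rep (fr y t)) \<otimes> snd (loc_rep (fr x s)))
      (snd (loc_rep (fr x s)) \<otimes> snd (loc_rep (fr y t)))"
    unfolding localization_def by simp
  also have "\<dots> = fr (x \<otimes> t \<oplus> y \<otimes> s) (s \<otimes> t)"
    by (rule add_compat) (use assms rep_props in auto)
  finally show ?thesis .
qed

lemma L_cring: "cring L"
proof (rule cringI)
  show "abelian_group L"
  proof (rule abelian_groupI)
    fix U V assume "U \<in> carrier L" "V \<in> carrier L"
    then show "U \<oplus>\<^bsub>L\<^esub> V \<in> carrier L"
      by (elim L_cases) (auto simp: L_add S_mult S_carr intro!: fr_closed)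
  next
    show "\<zero>\<^bsub>L\<^esub> \<in> carrier L" using L_zero fr_closed one_S by simp
  next
    fix U V W assume "U \<in> carrier L" "V \<in> carrier L" "W \<in> carrier L"
    then show "U \<oplus>\<^bsub>L\<^esub> V \<oplus>\<^bsub>L\<^esub> W = U \<oplus>\<^bsub>L\<^esub> (V \<oplus>\<^bsub>L\<^esub> W)"
    proof (elim L_cases)
      fix x s y t z r assume c: "x \<in> carrier R" "s \<in> S" "y \<in> carrier R" "t \<in> S" "z \<in> carrier R" "r \<in> S"
        and e: "U = fr x s" "V = fr y t" "W = fr z r"
      have cc: "s \<in> carrier R" "t \<in> carrier R" "r \<in> carrier R" using c S_carr by auto
      show ?thesis unfolding e using c cc
        by (simp add: L_add S_mult) (rule fr_eqI1, auto simp: S_mult, algebra)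
    qed
  next
    fix U V assume "U \<in> carrier L" "V \<in> carrier L"
    then show "U \<oplus>\<^bsub>L\<^esub> V = V \<oplus>\<^bsub>L\<^esub> U"
    proof (elim L_cases)
      fix x s y t assume c: "x \<in> carrier R" "s \<in> S" "y \<in> carrier R" "t \<in> S"
        and e: "U = fr x s" "V = fr y t"
      have cc: "s \<in> carrier R" "t \<in> carrier R" using c S_carr by auto
      show ?thesis unfolding e using c cc
        by (simp add: L_add S_mult) (rule fr_eqI1, auto simp: S_mult, algebra)
    qed
  next
    fix U assume "U \<in> carrier L"
    then show "\<zero>\<^bsub>L\<^esub> \<oplus>\<^bsub>L\<^esub> U = U"
    proof (elim L_cases)
      fix x s assume c: "x \<in> carrier R" "s \<in> S" and e: "U = fr x s"
      have cc: "s \<in> carrier R" using c S_carr by auto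
      show ?thesis unfolding e L_zero using c cc one_S
        by (simp add: L_add S_mult)
    qed
  next
    fix U assume "U \<in> carrier L"
    then show "\<exists>V\<in>carrier L. V \<oplus>\<^bsub>L\<^esub> U = \<zero>\<^bsub>L\<^esub>"
    proof (elim L_cases)
      fix x s assume c: "x \<in> carrier R" "s \<in> S" and e: "U = fr x s"
      have cc: "s \<in> carrier R" using c S_carr by auto
      have "fr (\<ominus> x) s \<oplus>\<^bsub>L\<^esub> U = \<zero>\<^bsub>L\<^esub>" unfolding e L_zero using c cc one_S
        by (simp add: L_add S_mult) (rule fr_eqI1, auto simp: S_mult, algebra)
      then show ?thesis using c fr_closed by (intro bexI[of _ "fr (\<ominus> x) s"]) auto
    qed
  qed
next
  show "comm_monoid L"
  proof (rule comm_monoidI)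
    fix U V assume "U \<in> carrier L" "V \<in> carrier L"
    then show "U \<otimes>\<^bsub>L\<^esub> V \<in> carrier L"
      by (elim L_cases) (auto simp: L_mult S_mult S_carr intro!: fr_closed)
  next
    show "\<one>\<^bsub>L\<^esub> \<in> carrier L" using L_one fr_closed one_S by simp
  next
    fix U V W assume "U \<in> carrier L" "V \<in> carrier L" "W \<in> carrier L"
    then show "U \<otimes>\<^bsub>L\<^esub> V \<otimes>\<^bsub>L\<^esub> W = U \<otimes>\<^bsub>L\<^esub> (V \<otimes>\<^bsub>L\<^esub> W)"
    proof (elim L_cases)
      fix x s y t z r assume c: "x \<in> carrier R" "s \<in> S" "y \<in> carrier R" "t \<in> S" "z \<in> carrier R" "r \<in> S"
        and e: "U = fr x s" "V = fr y t" "W = fr z r"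
      have cc: "s \<in> carrier R" "t \<in> carrier R" "r \<in> carrier R" using c S_carr by auto
      show ?thesis unfolding e using c cc
        by (simp add: L_mult S_mult) (rule fr_eqI1, auto simp: S_mult, algebra)
    qed
  next
    fix U assume "U \<in> carrier L"
    then show "\<one>\<^bsub>L\<^esub> \<otimes>\<^bsub>L\<^esub> U = U"
    proof (elim L_cases)
      fix x s assume c: "x \<in> carrier R" "s \<in> S" and e: "U = fr x s"
      have cc: "s \<in> carrier R" using c S_carr by auto
      show ?thesis unfolding e L_one using c cc one_S
        by (simp add: L_mult S_mult)
    qed
  next
    fix U V assume "U \<in> carrier L" "V \<in> carrier L"
    then show "U \<otimes>\<^bsub>L\<^esub> V = V \<otimes>\<^bsub>L\<^esub> U"
    proof (elim L_cases)
      fix x s y t assume c: "x \<in> carrier R" "s \<in> S" "y \<in> carrier R" "t \<in> S"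
        and e: "U = fr x s" "V = fr y t"
      have cc: "s \<in> carrier R" "t \<in> carrier R" using c S_carr by auto
      show ?thesis unfolding e using c cc
        by (simp add: L_mult S_mult) (rule fr_eqI1, auto simp: S_mult, algebra)
    qed
  qed
next
  fix U V W assume "U \<in> carrier L" "V \<in> carrier L" "W \<in> carrier L"
  then show "(U \<oplus>\<^bsub>L\<^esub> V) \<otimes>\<^bsub>L\<^esub> W = U \<otimes>\<^bsub>L\<^esub> W \<oplus>\<^bsub>L\<^esub> V \<otimes>\<^bsub>L\<^esub> W"
  proof (elim L_cases)
    fix x s y t z r assume c: "x \<in> carrier R" "s \<in> S" "y \<in> carrier R" "t \<in> S" "z \<in> carrier R" "r \<in> S"
      and e: "U = fr x s" "V = fr y t" "W = fr z r"
    have cc: "s \<in> carrier R" "t \<in> carrier R" "r \<in> carrier R" using c S_carr by auto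
    show ?thesis unfolding e using c cc
      by (simp add: L_mult L_add S_mult) (rule fr_eqI1, auto simp: S_mult, algebra)
  qed
qed

lemma L_zero_iff:
  assumes "x \<in> carrier R" "s \<in> S"
  shows "fr x s = \<zero>\<^bsub>L\<^esub> \<longleftrightarrow> (\<exists>u\<in>S. u \<otimes> x = \<zero>)"
proof -
  have "fr x s = \<zero>\<^bsub>L\<^esub> \<longleftrightarrow> (\<exists>u\<in>S. u \<otimes> (x \<otimes> \<one> \<ominus> \<zero> \<otimes> s) = \<zero>)"
    unfolding L_zero using frac_eq assms one_S by simp
  also have "\<dots> \<longleftrightarrow> (\<exists>u\<in>S. u \<otimes> x = \<zero>)"
    using assms S_carr by (simp add: minus_eq)
  finally show ?thesis .
qed

lemma can_eq: "loc_can R S x = fr x \<one>" unfolding loc_can_def by simp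

lemma can_closed: "x \<in> carrier R \<Longrightarrow> loc_can R S x \<in> carrier L"
  unfolding can_eq using fr_closed one_S by simp

lemma can_add: "x \<in> carrier R \<Longrightarrow> y \<in> carrier R \<Longrightarrow> loc_can R S (x \<oplus> y) = loc_can R S x \<oplus>\<^bsub>L\<^esub> loc_can R S y"
  unfolding can_eq using one_S by (simp add: L_add)

lemma can_mult: "x \<in> carrier R \<Longrightarrow> y \<in> carrier R \<Longrightarrow> loc_can R S (x \<otimes> y) = loc_can R S x \<otimes>\<^bsub>L\<^esub> loc_can R S y"
  unfolding can_eq using one_S by (simp add: L_mult)

lemma loc_ext_zero_iff:
  assumes "I \<subseteq> carrier R"
  shows "loc_ext R S I = {\<zero>\<^bsub>L\<^esub>} \<longleftrightarrow> (\<forall>i\<in>I. \<exists>u\<in>S. u \<otimes> i = \<zero>)"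
proof -
  interpret Lc: cring L by (rule L_cring)
  have sub: "loc_can R S ` I \<subseteq> carrier L" using can_closed assms by auto
  show ?thesis
  proof
    assume h: "loc_ext R S I = {\<zero>\<^bsub>L\<^esub>}"
    show "\<forall>i\<in>I. \<exists>u\<in>S. u \<otimes> i = \<zero>"
    proof
      fix i assume i: "i \<in> I"
      have "loc_can R S i \<in> loc_ext R S I"
        unfolding loc_ext_def using Lc.genideal_self[OF sub] i by auto
      then have "fr i \<one> = \<zero>\<^bsub>L\<^esub>" using h can_eq by simp
      then show "\<exists>u\<in>S. u \<otimes> i = \<zero>" using L_zero_iff one_S assms i by auto
    qed
  next
    assume h: "\<forall>i\<in>I. \<exists>u\<in>S. u \<otimes> i = \<zero>"
    have "loc_can R S ` I \<subseteq> {\<zero>\<^bsub>L\<^esub>}"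
    proof
      fix V assume "V \<in> loc_can R S ` I"
      then obtain i where i: "i \<in> I" "V = fr i \<one>" using can_eq by auto
      have "i \<in> carrier R" using i assms by auto
      then have "fr i \<one> = \<zero>\<^bsub>L\<^esub>" using L_zero_iff[of i \<one>] one_S h i by blast
      then show "V \<in> {\<zero>\<^bsub>L\<^esub>}" using i by simp
    qed
    then have "loc_ext R S I \<subseteq> {\<zero>\<^bsub>L\<^esub>}"
      unfolding loc_ext_def by (rule Lc.genideal_minimal[OF Lc.zeroideal])
    moreover have "\<zero>\<^bsub>L\<^esub> \<in> loc_ext R S I"
      unfolding loc_ext_def using Lc.genideal_ideal[OF sub] additive_subgroup.zero_closed ideal.axioms(1) by blast
    ultimately show "loc_ext R S I = {\<zero>\<^bsub>L\<^esub>}" by auto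
  qed
qed

lemma loc_ext_genideal:
  assumes F: "F \<subseteq> carrier R"
  shows "loc_ext R S (genideal R F) = genideal L (loc_can R S ` F)"
proof -
  interpret Lc: cring L by (rule L_cring)
  have subF: "loc_can R S ` F \<subseteq> carrier L" using can_closed F by blast
  have GI: "ideal (genideal R F) R" using genideal_ideal[OF F] .
  have Gsub: "genideal R F \<subseteq> carrier R" using ideal.Icarr[OF GI] by blast
  have subG: "loc_can R S ` genideal R F \<subseteq> carrier L" using can_closed Gsub by blast
  define K where "K = genideal L (loc_can R S ` F)"
  have KI: "ideal K L" unfolding K_def using Lc.genideal_ideal[OF subF] .
  define P where "P = {x \<in> carrier R. loc_can R S x \<in> K}"
  have PI: "ideal P R"
  proof (rule idealI)
    show "ring R" by (rule ring_axioms)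
    show "subgroup P (add_monoid R)"
    proof (rule subgroup.intro)
      show "P \<subseteq> carrier (add_monoid R)" unfolding P_def by auto
    next
      fix x y assume xy: "x \<in> P" "y \<in> P"
      then have c: "x \<in> carrier R" "y \<in> carrier R" unfolding P_def by auto
      have "loc_can R S (x \<oplus> y) \<in> K"
        using can_add[OF c] additive_subgroup.a_closed[OF ideal.axioms(1)[OF KI]] xy unfolding P_def by simp
      then show "x \<otimes>\<^bsub>add_monoid R\<^esub> y \<in> P" unfolding P_def using c by simp
    next
      have "loc_can R S \<zero> = \<zero>\<^bsub>L\<^esub>" unfolding can_eq L_zero by simp
      then show "\<one>\<^bsub>add_monoid R\<^esub> \<in> P" unfolding P_def
        using additive_subgroup.zero_closed[OF ideal.axioms(1)[OF KI]] by simp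
    next
      fix x assume x: "x \<in> P"
      then have c: "x \<in> carrier R" unfolding P_def by auto
      have "loc_can R S (\<ominus> x) = loc_can R S (\<ominus> \<one>) \<otimes>\<^bsub>L\<^esub> loc_can R S x"
        using c can_mult[of "\<ominus> \<one>" x] by (simp add: l_minus)
      also have "\<dots> \<in> K" using x ideal.I_l_closed[OF KI] can_closed[of "\<ominus> \<one>"] unfolding P_def by simp
      finally show "inv\<^bsub>add_monoid R\<^esub> x \<in> P"
        using c unfolding P_def by (simp add: a_inv_def[symmetric])
    qed
  next
    fix a x assume ax: "a \<in> P" "x \<in> carrier R"
    then have c: "a \<in> carrier R" unfolding P_def by auto
    have "loc_can R S (x \<otimes> a) \<in> K"
      using can_mult[OF ax(2) c] ideal.I_l_closed[OF KI] can_closed[OF ax(2)] ax(1) unfolding P_def by simp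
    then show "x \<otimes> a \<in> P" unfolding P_def using c ax by simp
  next
    fix a x assume ax: "a \<in> P" "x \<in> carrier R"
    then have c: "a \<in> carrier R" unfolding P_def by auto
    have "loc_can R S (a \<otimes> x) \<in> K"
      using can_mult[OF c ax(2)] ideal.I_r_closed[OF KI] can_closed[OF ax(2)] ax(1) unfolding P_def by simp
    then show "a \<otimes> x \<in> P" unfolding P_def using c ax by simp
  qed
  have FP: "F \<subseteq> P"
  proof
    fix x assume "x \<in> F"
    then show "x \<in> P" unfolding P_def K_def using F Lc.genideal_self[OF subF] by blast
  qed
  have "genideal R F \<subseteq> P" by (rule genideal_minimal[OF PI FP])
  then have "loc_can R S ` genideal R F \<subseteq> K" unfolding P_def by blast
  then have 1: "genideal L (loc_can R S ` genideal R F) \<subseteq> K"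
    by (rule Lc.genideal_minimal[OF KI])
  have "loc_can R S ` F \<subseteq> loc_can R S ` genideal R F"
    using genideal_self[OF F] by (rule image_mono)
  then have 2: "K \<subseteq> genideal L (loc_can R S ` genideal R F)"
    unfolding K_def by (rule Lc.subset_Idl_subset[OF subG])
  show ?thesis unfolding loc_ext_def using 1 2 K_def by blast
qed


lemma L_div1:
  assumes c: "u \<in> carrier R" "s \<in> S" "v \<in> carrier R" "t \<in> S" "sg \<in> S" "x \<in> carrier R"
    and e: "sg \<otimes> u = x \<otimes> v"
  shows "\<exists>Xx\<in>carrier L. fr u s = Xx \<otimes>\<^bsub>L\<^esub> fr v t"
proof -
  have cc: "s \<in> carrier R" "t \<in> carrier R" "sg \<in> carrier R" using c S_carr by auto
  have "fr (x \<otimes> t) (sg \<otimes> s) \<otimes>\<^bsub>L\<^esub> fr v t = fr (x \<otimes> t \<otimes> v) (sg \<otimes> s \<otimes> t)"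
    using c cc S_mult by (simp add: L_mult)
  also have "\<dots> = fr u s"
  proof (rule fr_eqI1)
    have "x \<otimes> t \<otimes> v \<otimes> s = (x \<otimes> v) \<otimes> (s \<otimes> t)" using c cc by algebra
    also have "\<dots> = (sg \<otimes> u) \<otimes> (s \<otimes> t)" using e by simp
    also have "\<dots> = u \<otimes> (sg \<otimes> s \<otimes> t)" using c cc by algebra
    finally show "x \<otimes> t \<otimes> v \<otimes> s = u \<otimes> (sg \<otimes> s \<otimes> t)" .
  qed (use c cc S_mult in auto)
  finally show ?thesis using c cc S_mult fr_closed by (intro bexI[of _ "fr (x \<otimes> t) (sg \<otimes> s)"]) auto
qed

lemma L_div:
  assumes ch: "chS R S" and U: "U \<in> carrier L" and V: "V \<in> carrier L"
  shows "(\<exists>Xx\<in>carrier L. U = Xx \<otimes>\<^bsub>L\<^esub> V) \<or> (\<exists>Xx\<in>carrier L. V = Xx \<otimes>\<^bsub>L\<^esub> U)"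
proof -
  obtain u s where u: "u \<in> carrier R" "s \<in> S" "U = fr u s" using U by (elim L_cases)
  obtain v t where v: "v \<in> carrier R" "t \<in> S" "V = fr v t" using V by (elim L_cases)
  obtain sg x where sx: "sg \<in> S" "x \<in> carrier R" "sg \<otimes> u = x \<otimes> v \<or> sg \<otimes> v = x \<otimes> u"
    using ch u v unfolding chS_def by blast
  from sx(3) show ?thesis
  proof
    assume "sg \<otimes> u = x \<otimes> v"
    then have "\<exists>Xx\<in>carrier L. fr u s = Xx \<otimes>\<^bsub>L\<^esub> fr v t" using L_div1 u v sx by blast
    then show ?thesis using u v by simp
  next
    assume "sg \<otimes> v = x \<otimes> u"
    then have "\<exists>Xx\<in>carrier L. fr v t = Xx \<otimes>\<^bsub>L\<^esub> fr u s" using L_div1 u v sx by blast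
    then show ?thesis using u v by simp
  qed
qed

lemma L_div_imp:
  assumes c: "a \<in> carrier R" "b \<in> carrier R" and Xx: "Xx \<in> carrier L"
    and e: "loc_can R S a = Xx \<otimes>\<^bsub>L\<^esub> loc_can R S b"
  shows "\<exists>s\<in>S. \<exists>x\<in>carrier R. s \<otimes> a = x \<otimes> b"
proof -
  obtain x t where x: "x \<in> carrier R" "t \<in> S" "Xx = fr x t" using Xx by (elim L_cases)
  have "fr a \<one> = fr (x \<otimes> b) t" using e x c one_S S_carr[of t] unfolding can_eq by (simp add: L_mult)
  then obtain u where u: "u \<in> S" "u \<otimes> (a \<otimes> t \<ominus> x \<otimes> b \<otimes> \<one>) = \<zero>"
    using frac_eq x c one_S by auto
  have cc: "u \<in> carrier R" "t \<in> carrier R" using u x S_carr by auto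
  have "(u \<otimes> t) \<otimes> a = (u \<otimes> x) \<otimes> b"
  proof -
    have "(u \<otimes> t) \<otimes> a = u \<otimes> (a \<otimes> t \<ominus> x \<otimes> b \<otimes> \<one>) \<oplus> (u \<otimes> x) \<otimes> b" using cc c x by algebra
    then show ?thesis using u cc c x by simp
  qed
  then show ?thesis using u x S_mult cc by (rule_tac bexI[of _ "u \<otimes> t"], rule_tac bexI[of _ "u \<otimes> x"]) auto
qed

lemma chained_imp:
  assumes h: "\<forall>I1 I2. ideal I1 L \<and> ideal I2 L \<longrightarrow> I1 \<subseteq> I2 \<or> I2 \<subseteq> I1"
  shows "chS R S"
  unfolding chS_def
proof (intro ballI)
  interpret Lc: cring L by (rule L_cring)
  fix a b assume ab: "a \<in> carrier R" "b \<in> carrier R"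
  define A where "A = loc_can R S a"
  define B where "B = loc_can R S b"
  have AB: "A \<in> carrier L" "B \<in> carrier L" using can_closed ab A_def B_def by auto
  have "PIdl\<^bsub>L\<^esub> A \<subseteq> PIdl\<^bsub>L\<^esub> B \<or> PIdl\<^bsub>L\<^esub> B \<subseteq> PIdl\<^bsub>L\<^esub> A"
    using h[rule_format, OF conjI[OF Lc.cgenideal_ideal[OF AB(1)] Lc.cgenideal_ideal[OF AB(2)]]] .
  then show "\<exists>s\<in>S. \<exists>x\<in>carrier R. s \<otimes> a = x \<otimes> b \<or> s \<otimes> b = x \<otimes> a"
  proof
    assume "PIdl\<^bsub>L\<^esub> A \<subseteq> PIdl\<^bsub>L\<^esub> B"
    then have "A \<in> PIdl\<^bsub>L\<^esub> B" using Lc.cgenideal_self[OF AB(1)] by (rule subsetD)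
    then obtain Xx where "Xx \<in> carrier L" "A = Xx \<otimes>\<^bsub>L\<^esub> B" unfolding cgenideal_def by blast
    then obtain s x where "s \<in> S" "x \<in> carrier R" "s \<otimes> a = x \<otimes> b"
      using L_div_imp[OF ab] A_def B_def by blast
    then show ?thesis by blast
  next
    assume "PIdl\<^bsub>L\<^esub> B \<subseteq> PIdl\<^bsub>L\<^esub> A"
    then have "B \<in> PIdl\<^bsub>L\<^esub> A" using Lc.cgenideal_self[OF AB(2)] by (rule subsetD)
    then obtain Xx where "Xx \<in> carrier L" "B = Xx \<otimes>\<^bsub>L\<^esub> A" unfolding cgenideal_def by blast
    then obtain s x where "s \<in> S" "x \<in> carrier R" "s \<otimes> b = x \<otimes> a"
      using L_div_imp[OF ab(2) ab(1)] A_def B_def by blast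
    then show ?thesis by blast
  qed
qed

lemma chained_from:
  assumes ch: "chS R S"
  shows "\<forall>I1 I2. ideal I1 L \<and> ideal I2 L \<longrightarrow> I1 \<subseteq> I2 \<or> I2 \<subseteq> I1"
proof (intro allI impI, rule ccontr)
  fix I1 I2 assume I: "ideal I1 L \<and> ideal I2 L" and n: "\<not> (I1 \<subseteq> I2 \<or> I2 \<subseteq> I1)"
  have i1: "ideal I1 L" and i2: "ideal I2 L" using I by auto
  obtain U where U: "U \<in> I1" "U \<notin> I2" using n by auto
  obtain V where V: "V \<in> I2" "V \<notin> I1" using n by auto
  have c: "U \<in> carrier L" "V \<in> carrier L" using U V ideal.Icarr[OF i1] ideal.Icarr[OF i2] by auto
  from L_div[OF ch c] show False
  proof
    assume "\<exists>Xx\<in>carrier L. U = Xx \<otimes>\<^bsub>L\<^esub> V"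
    then obtain Xx where "Xx \<in> carrier L" "U = Xx \<otimes>\<^bsub>L\<^esub> V" by blast
    then have "U \<in> I2" using ideal.I_l_closed[OF i2 V(1)] by simp
    then show False using U by simp
  next
    assume "\<exists>Xx\<in>carrier L. V = Xx \<otimes>\<^bsub>L\<^esub> U"
    then obtain Xx where "Xx \<in> carrier L" "V = Xx \<otimes>\<^bsub>L\<^esub> U" by blast
    then have "V \<in> I1" using ideal.I_l_closed[OF i1 U(1)] by simp
    then show False using V by simp
  qed
qed

lemma chained_iff:
  "(\<forall>I1 I2. ideal I1 L \<and> ideal I2 L \<longrightarrow> I1 \<subseteq> I2 \<or> I2 \<subseteq> I1) \<longleftrightarrow> chS R S"
  using chained_imp chained_from by blast

end

lemma (in cring) Idl_two:
  assumes p: "p \<in> carrier R" and q: "q \<in> carrier R" and w: "w \<in> Idl {p, q}"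
  shows "\<exists>Xx\<in>carrier R. \<exists>Yy\<in>carrier R. w = Xx \<otimes> p \<oplus> Yy \<otimes> q"
proof -
  define T where "T = {Xx \<otimes> p \<oplus> Yy \<otimes> q | Xx Yy. Xx \<in> carrier R \<and> Yy \<in> carrier R}"
  have "T = set_add R (PIdl p) (PIdl q)"
  proof
    show "T \<subseteq> set_add R (PIdl p) (PIdl q)"
    proof
      fix z assume "z \<in> T"
      then obtain Xx Yy where z: "Xx \<in> carrier R" "Yy \<in> carrier R" "z = Xx \<otimes> p \<oplus> Yy \<otimes> q"
        unfolding T_def by blast
      have "Xx \<otimes> p \<in> PIdl p" "Yy \<otimes> q \<in> PIdl q" unfolding cgenideal_def using z by blast+
      then show "z \<in> set_add R (PIdl p) (PIdl q)" unfolding set_add_def' using z by blast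
    qed
  next
    show "set_add R (PIdl p) (PIdl q) \<subseteq> T"
    proof
      fix z assume "z \<in> set_add R (PIdl p) (PIdl q)"
      then obtain a b where ab: "a \<in> PIdl p" "b \<in> PIdl q" "z = a \<oplus> b" unfolding set_add_def' by blast
      then obtain Xx Yy where "Xx \<in> carrier R" "Yy \<in> carrier R" "a = Xx \<otimes> p" "b = Yy \<otimes> q"
        unfolding cgenideal_def by blast
      then show "z \<in> T" unfolding T_def using ab by blast
    qed
  qed
  then have I: "ideal T R" using add_ideals cgenideal_ideal p q by simp
  have pT: "p \<in> T" unfolding T_def
  proof -
    have "p = \<one> \<otimes> p \<oplus> \<zero> \<otimes> q" using p q by simp
    then show "p \<in> {Xx \<otimes> p \<oplus> Yy \<otimes> q | Xx Yy. Xx \<in> carrier R \<and> Yy \<in> carrier R}" by blast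
  qed
  have qT: "q \<in> T" unfolding T_def
  proof -
    have "q = \<zero> \<otimes> p \<oplus> \<one> \<otimes> q" using p q by simp
    then show "q \<in> {Xx \<otimes> p \<oplus> Yy \<otimes> q | Xx Yy. Xx \<in> carrier R \<and> Yy \<in> carrier R}" by blast
  qed
  have "{p, q} \<subseteq> T" using pT qT by simp
  then have "Idl {p, q} \<subseteq> T" by (rule genideal_minimal[OF I])
  then have "w \<in> T" using w by (rule subsetD)
  then show ?thesis unfolding T_def by blast
qed

lemma (in cring) Idl_empty: "Idl {} = {\<zero>}"
proof -
  have "Idl {} \<subseteq> {\<zero>}" by (rule genideal_minimal[OF zeroideal]) simp
  moreover have "\<zero> \<in> Idl {}"
    using additive_subgroup.zero_closed[OF ideal.axioms(1)[OF genideal_ideal[of "{}"]]] by simp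
  ultimately show ?thesis by blast
qed


lemma (in cring) chain_principal:
  assumes div: "\<And>U V. U \<in> carrier R \<Longrightarrow> V \<in> carrier R \<Longrightarrow>
     (\<exists>Xx\<in>carrier R. U = Xx \<otimes> V) \<or> (\<exists>Xx\<in>carrier R. V = Xx \<otimes> U)"
    and fin: "finite G"
  shows "G \<subseteq> carrier R \<Longrightarrow> \<exists>W\<in>carrier R. Idl G = PIdl W"
  using fin
proof (induction G rule: finite_induct)
  case empty
  have "PIdl \<zero> = {\<zero>}" unfolding cgenideal_def using one_closed r_null by force
  then show ?case using Idl_empty by auto
next
  case (insert U G)
  then obtain W where W: "W \<in> carrier R" "Idl G = PIdl W" by auto
  have U: "U \<in> carrier R" "G \<subseteq> carrier R" using insert by auto
  have IG: "ideal (Idl (insert U G)) R" using genideal_ideal insert by auto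
  have sub: "Idl G \<subseteq> Idl (insert U G)" using subset_Idl_subset[of "insert U G" G] U by blast
  have Uin: "U \<in> Idl (insert U G)" using genideal_self[of "insert U G"] U by blast
  have Gin: "G \<subseteq> PIdl W" using W genideal_self[of G] U by blast
  from div[OF U(1) W(1)] show ?case
  proof
    assume "\<exists>Xx\<in>carrier R. U = Xx \<otimes> W"
    then have UW: "U \<in> PIdl W" unfolding cgenideal_def by auto
    have "Idl (insert U G) = PIdl W"
    proof
      show "Idl (insert U G) \<subseteq> PIdl W"
        using genideal_minimal[OF cgenideal_ideal[OF W(1)]] UW Gin by auto
      show "PIdl W \<subseteq> Idl (insert U G)"
        using cgenideal_minimal[OF IG] sub W genideal_self' cgenideal_self by auto
    qed
    then show ?thesis using W by auto
  next
    assume "\<exists>Xx\<in>carrier R. W = Xx \<otimes> U"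
    then have WU: "W \<in> PIdl U" unfolding cgenideal_def by auto
    have "PIdl W \<subseteq> PIdl U" using cgenideal_minimal[OF cgenideal_ideal[OF U(1)] WU] .
    have "Idl (insert U G) = PIdl U"
    proof
      show "Idl (insert U G) \<subseteq> PIdl U"
        using genideal_minimal[OF cgenideal_ideal[OF U(1)]] cgenideal_self[OF U(1)] Gin
          \<open>PIdl W \<subseteq> PIdl U\<close> by auto
      show "PIdl U \<subseteq> Idl (insert U G)"
        using cgenideal_minimal[OF IG Uin] .
    qed
    then show ?thesis using U by auto
  qed
qed


locale mloc = cring R for R (structure) + fixes M assumes maxM: "maximalideal M R"
begin

lemma primeM: "primeideal M R" using maximalideal_prime[OF maxM] .
lemma idealM: "ideal M R" using maxM maximalideal.axioms(1) by blast
lemma Mcarr: "M \<subseteq> carrier R" using ideal.Icarr[OF idealM] by blast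
lemma oneM: "\<one> \<notin> M"
  using ideal.one_imp_carrier[OF idealM] primeideal.I_notcarr[OF primeM] by blast
lemma primeM': "a \<in> carrier R \<Longrightarrow> b \<in> carrier R \<Longrightarrow> a \<otimes> b \<in> M \<Longrightarrow> a \<in> M \<or> b \<in> M"
  using primeideal.I_prime[OF primeM] by blast
lemma notM_mult: "a \<in> carrier R - M \<Longrightarrow> b \<in> carrier R - M \<Longrightarrow> a \<otimes> b \<in> carrier R - M"
  using primeM' by auto

end

sublocale mloc \<subseteq> msub R "carrier R - M"
proof unfold_locales
  show "carrier R - M \<subseteq> carrier R" by blast
  show "\<one> \<in> carrier R - M" using oneM by simp
  fix s t assume "s \<in> carrier R - M" "t \<in> carrier R - M"
  then show "s \<otimes> t \<in> carrier R - M" by (rule notM_mult)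
qed

context mloc
begin

lemma M_l: "x \<in> M \<Longrightarrow> a \<in> carrier R \<Longrightarrow> a \<otimes> x \<in> M" using ideal.I_l_closed[OF idealM] by blast
lemma M_r: "x \<in> M \<Longrightarrow> a \<in> carrier R \<Longrightarrow> x \<otimes> a \<in> M" using ideal.I_r_closed[OF idealM] by blast
lemma M_add: "x \<in> M \<Longrightarrow> y \<in> M \<Longrightarrow> x \<oplus> y \<in> M"
  using additive_subgroup.a_closed[OF ideal.axioms(1)[OF idealM]] by blast

lemma num_M:
  assumes c: "x \<in> carrier R" "s \<in> carrier R - M" "y \<in> carrier R" "t \<in> carrier R - M"
    and e: "fr x s = fr y t" and xM: "x \<in> M"
  shows "y \<in> M"
proof -
  obtain u where u: "u \<in> carrier R - M" "u \<otimes> (x \<otimes> t \<ominus> y \<otimes> s) = \<zero>" using e frac_eq[OF c] by blast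
  have uc: "u \<in> carrier R" "s \<in> carrier R" "t \<in> carrier R" using u c by auto
  have "u \<otimes> (x \<otimes> t) = u \<otimes> (y \<otimes> s) \<oplus> u \<otimes> (x \<otimes> t \<ominus> y \<otimes> s)" using uc c(1,3) by algebra
  then have "u \<otimes> (y \<otimes> s) = u \<otimes> (x \<otimes> t)" using u c by simp
  moreover have "u \<otimes> (x \<otimes> t) \<in> M" using M_l M_r xM u c by simp
  ultimately have "u \<otimes> (y \<otimes> s) \<in> M" by simp
  then have "y \<otimes> s \<in> M" using primeM'[of u "y \<otimes> s"] u c by auto
  then show ?thesis using primeM'[of y s] c by auto
qed

lemma arith_to:
  assumes ar: "arithmetical R"
  shows "chS R (carrier R - M)"
  unfolding chS_def
proof (intro ballI)
  interpret Lc: cring L by (rule L_cring)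
  fix a b assume ab: "a \<in> carrier R" "b \<in> carrier R"
  define A where "A = loc_can R (carrier R - M) a"
  define B where "B = loc_can R (carrier R - M) b"
  have AB: "A \<in> carrier L" "B \<in> carrier L" using can_closed ab A_def B_def by auto
  have F: "{a, b} \<subseteq> carrier R" using ab by auto
  have "fin_gen_ideal (genideal R {a, b}) R"
    unfolding fin_gen_ideal_def using genideal_ideal[OF F] F
    by (intro conjI exI[of _ "{a, b}"]) simp_all
  then have "principalideal (loc_ext R (carrier R - M) (genideal R {a, b})) L"
    using ar maxM unfolding arithmetical_def locally_principal_def by (elim conjE allE impE) simp_all
  moreover have "loc_ext R (carrier R - M) (genideal R {a, b}) = genideal L {A, B}"
    using loc_ext_genideal[OF F] A_def B_def by simp
  ultimately have "principalideal (genideal L {A, B}) L" by simp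
  then obtain W where W: "W \<in> carrier L" "genideal L {A, B} = genideal L {W}"
    using principalideal.generate by blast
  have WP: "genideal L {A, B} = PIdl\<^bsub>L\<^esub> W" using W Lc.cgenideal_eq_genideal by simp
  have ABin: "A \<in> genideal L {A, B}" "B \<in> genideal L {A, B}" using Lc.genideal_self[of "{A, B}"] AB by auto
  obtain G where G: "G \<in> carrier L" "A = G \<otimes>\<^bsub>L\<^esub> W" using ABin WP unfolding cgenideal_def by blast
  obtain H where H: "H \<in> carrier L" "B = H \<otimes>\<^bsub>L\<^esub> W" using ABin WP unfolding cgenideal_def by blast
  have "W \<in> genideal L {A, B}" using WP Lc.cgenideal_self W by simp
  then obtain Xx Yy where XY: "Xx \<in> carrier L" "Yy \<in> carrier L" "W = Xx \<otimes>\<^bsub>L\<^esub> A \<oplus>\<^bsub>L\<^esub> Yy \<otimes>\<^bsub>L\<^esub> B"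
    using Lc.Idl_two[OF AB] by blast
  define E where "E = Xx \<otimes>\<^bsub>L\<^esub> G \<oplus>\<^bsub>L\<^esub> Yy \<otimes>\<^bsub>L\<^esub> H"
  have WE: "W = W \<otimes>\<^bsub>L\<^esub> E"
  proof -
    have "W = Xx \<otimes>\<^bsub>L\<^esub> (G \<otimes>\<^bsub>L\<^esub> W) \<oplus>\<^bsub>L\<^esub> Yy \<otimes>\<^bsub>L\<^esub> (H \<otimes>\<^bsub>L\<^esub> W)" using XY G H by simp
    also have "\<dots> = W \<otimes>\<^bsub>L\<^esub> E" unfolding E_def using XY(1,2) G(1) H(1) W(1) by algebra
    finally show ?thesis .
  qed
  have GB: "G \<otimes>\<^bsub>L\<^esub> B = H \<otimes>\<^bsub>L\<^esub> A"
    using G H W by (simp add: Lc.m_assoc[symmetric] Lc.m_comm[of G H])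
  obtain w sg where w: "w \<in> carrier R" "sg \<in> carrier R - M" "W = fr w sg" using W(1) by (elim L_cases)
  obtain g tg where g: "g \<in> carrier R" "tg \<in> carrier R - M" "G = fr g tg" using G(1) by (elim L_cases)
  obtain h th where h: "h \<in> carrier R" "th \<in> carrier R - M" "H = fr h th" using H(1) by (elim L_cases)
  have EC: "E \<in> carrier L" unfolding E_def using XY G H by simp
  obtain e rh where e: "e \<in> carrier R" "rh \<in> carrier R - M" "E = fr e rh" using EC by (elim L_cases)
  have A1: "A = fr a \<one>" "B = fr b \<one>" using A_def B_def can_eq by auto
  show "\<exists>s\<in>carrier R - M. \<exists>x\<in>carrier R. s \<otimes> a = x \<otimes> b \<or> s \<otimes> b = x \<otimes> a"
  proof (cases "e \<in> M")
    case True
    have "fr w sg = fr (w \<otimes> e) (sg \<otimes> rh)" using WE w e by (simp add: L_mult)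
    moreover have c1: "w \<otimes> e \<in> carrier R" "sg \<otimes> rh \<in> carrier R - M" using w e notM_mult by auto
    ultimately obtain u where u: "u \<in> carrier R - M" "u \<otimes> (w \<otimes> (sg \<otimes> rh) \<ominus> (w \<otimes> e) \<otimes> sg) = \<zero>"
      using frac_eq[OF w(1) w(2) c1(1) c1(2)] by blast
    have rmM: "rh \<ominus> e \<notin> M"
    proof
      assume "rh \<ominus> e \<in> M"
      then have "(rh \<ominus> e) \<oplus> e \<in> M" using M_add True by blast
      moreover have "(rh \<ominus> e) \<oplus> e = rh" using e(1) e(2) by simp algebra
      ultimately show False using e by simp
    qed
    have z: "u \<otimes> sg \<otimes> (rh \<ominus> e) \<in> carrier R - M"
      using notM_mult u w rmM e by auto
    have "(u \<otimes> sg \<otimes> (rh \<ominus> e)) \<otimes> w = u \<otimes> (w \<otimes> (sg \<otimes> rh) \<ominus> (w \<otimes> e) \<otimes> sg)"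
      using u(1) w(1,2) e(1,2) by simp algebra
    also have "\<dots> = \<zero>" using u by simp
    finally have "W = \<zero>\<^bsub>L\<^esub>" using L_zero_iff[OF w(1,2)] w(3) z by blast
    then have "A = \<zero>\<^bsub>L\<^esub>" using G by simp
    then obtain u' where u': "u' \<in> carrier R - M" "u' \<otimes> a = \<zero>" using L_zero_iff[of a \<one>] A1 ab one_S by auto
    then have "u' \<otimes> a = \<zero> \<otimes> b" using ab by simp
    then show ?thesis using u' by blast
  next
    case False
    obtain p1 t1 where p1: "p1 \<in> carrier R" "t1 \<in> carrier R - M" "Xx \<otimes>\<^bsub>L\<^esub> G = fr p1 t1"
      by (rule L_cases[OF Lc.m_closed[OF XY(1) G(1)]])
    obtain p2 t2 where p2: "p2 \<in> carrier R" "t2 \<in> carrier R - M" "Yy \<otimes>\<^bsub>L\<^esub> H = fr p2 t2"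
      by (rule L_cases[OF Lc.m_closed[OF XY(2) H(1)]])
    obtain xi ka where xi: "xi \<in> carrier R" "ka \<in> carrier R - M" "Xx = fr xi ka" by (rule L_cases[OF XY(1)])
    obtain yi kb where yi: "yi \<in> carrier R" "kb \<in> carrier R - M" "Yy = fr yi kb" by (rule L_cases[OF XY(2)])
    have "fr e rh = fr (p1 \<otimes> t2 \<oplus> p2 \<otimes> t1) (t1 \<otimes> t2)"
      using e p1 p2 unfolding E_def by (simp add: L_add)
    moreover have "p1 \<otimes> t2 \<oplus> p2 \<otimes> t1 \<in> carrier R" "t1 \<otimes> t2 \<in> carrier R - M"
      using p1 p2 notM_mult by auto
    ultimately have "p1 \<otimes> t2 \<oplus> p2 \<otimes> t1 \<notin> M"
      using num_M[of "p1 \<otimes> t2 \<oplus> p2 \<otimes> t1" "t1 \<otimes> t2" e rh] e False by auto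
    then have "p1 \<notin> M \<or> p2 \<notin> M" using M_add M_r p1 p2 by auto
    then show ?thesis
    proof
      assume p1M: "p1 \<notin> M"
      have "fr p1 t1 = fr (xi \<otimes> g) (ka \<otimes> tg)" using p1 xi g by (simp add: L_mult)
      then have "xi \<otimes> g \<notin> M" using num_M[of "xi \<otimes> g" "ka \<otimes> tg" p1 t1] p1 xi g p1M notM_mult by auto
      then have gM: "g \<notin> M" using M_l xi by auto
      have "fr (g \<otimes> b) (tg \<otimes> \<one>) = fr (h \<otimes> a) (th \<otimes> \<one>)" using GB g h A1 ab one_S by (simp add: L_mult)
      then have "fr (g \<otimes> b) tg = fr (h \<otimes> a) th" using g h by simp
      then obtain u where u: "u \<in> carrier R - M" "u \<otimes> ((g \<otimes> b) \<otimes> th \<ominus> (h \<otimes> a) \<otimes> tg) = \<zero>"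
        using frac_eq[of "g \<otimes> b" tg "h \<otimes> a" th] g h ab by auto
      have "(u \<otimes> g \<otimes> th) \<otimes> b = (u \<otimes> h \<otimes> tg) \<otimes> a \<oplus> u \<otimes> ((g \<otimes> b) \<otimes> th \<ominus> (h \<otimes> a) \<otimes> tg)"
        using u(1) g(1,2) h(1,2) ab by simp algebra
      then have "(u \<otimes> g \<otimes> th) \<otimes> b = (u \<otimes> h \<otimes> tg) \<otimes> a" using u g h ab by simp
      moreover have "u \<otimes> g \<otimes> th \<in> carrier R - M" using notM_mult u g gM h by auto
      moreover have "u \<otimes> h \<otimes> tg \<in> carrier R" using u h g by auto
      ultimately show ?thesis by blast
    next
      assume p2M: "p2 \<notin> M"
      have "fr p2 t2 = fr (yi \<otimes> h) (kb \<otimes> th)" using p2 yi h by (simp add: L_mult)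
      then have "yi \<otimes> h \<notin> M" using num_M[of "yi \<otimes> h" "kb \<otimes> th" p2 t2] p2 yi h p2M notM_mult by auto
      then have hM: "h \<notin> M" using M_l yi by auto
      have "fr (h \<otimes> a) (th \<otimes> \<one>) = fr (g \<otimes> b) (tg \<otimes> \<one>)" using GB g h A1 ab one_S by (simp add: L_mult)
      then have "fr (h \<otimes> a) th = fr (g \<otimes> b) tg" using g h by simp
      then obtain u where u: "u \<in> carrier R - M" "u \<otimes> ((h \<otimes> a) \<otimes> tg \<ominus> (g \<otimes> b) \<otimes> th) = \<zero>"
        using frac_eq[of "h \<otimes> a" th "g \<otimes> b" tg] g h ab by auto
      have "(u \<otimes> h \<otimes> tg) \<otimes> a = (u \<otimes> g \<otimes> th) \<otimes> b \<oplus> u \<otimes> ((h \<otimes> a) \<otimes> tg \<ominus> (g \<otimes> b) \<otimes> th)"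
        using u(1) g(1,2) h(1,2) ab by simp algebra
      then have "(u \<otimes> h \<otimes> tg) \<otimes> a = (u \<otimes> g \<otimes> th) \<otimes> b" using u g h ab by simp
      moreover have "u \<otimes> h \<otimes> tg \<in> carrier R - M" using notM_mult u g hM h by auto
      moreover have "u \<otimes> g \<otimes> th \<in> carrier R" using u h g by auto
      ultimately show ?thesis by blast
    qed
  qed
qed

end

lemma arith_imp_chS:
  assumes "cring R" "arithmetical R" "maximalideal M R"
  shows "chS R (carrier R - M)"
proof -
  interpret mloc R M using assms by (simp add: mloc_def mloc_axioms_def)
  show ?thesis using arith_to assms by blast
qed

lemma chS_imp_arith:
  assumes cr: "cring R" and ch: "\<And>M. maximalideal M R \<Longrightarrow> chS R (carrier R - M)"
  shows "arithmetical R"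
  unfolding arithmetical_def
proof (intro conjI allI impI)
  show "cring R" by fact
  fix I assume "fin_gen_ideal I R"
  then obtain F where F: "finite F" "F \<subseteq> carrier R" "I = genideal R F"
    unfolding fin_gen_ideal_def by blast
  show "locally_principal I R" unfolding locally_principal_def
  proof (intro allI impI)
    fix M assume Mm: "maximalideal M R"
    interpret mloc R M using cr Mm by (simp add: mloc_def mloc_axioms_def)
    interpret Lc: cring L by (rule L_cring)
    have subF: "loc_can R (carrier R - M) ` F \<subseteq> carrier L" using can_closed F by blast
    have "\<exists>W\<in>carrier L. genideal L (loc_can R (carrier R - M) ` F) = PIdl\<^bsub>L\<^esub> W"
      by (rule Lc.chain_principal[OF L_div[OF ch[OF Mm]] finite_imageI[OF F(1)] subF]) 
    then obtain W where W: "W \<in> carrier L" "genideal L (loc_can R (carrier R - M) ` F) = PIdl\<^bsub>L\<^esub> W" by blast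
    have "loc_ext R (carrier R - M) I = genideal L {W}"
      using loc_ext_genideal[OF F(2)] F(3) W Lc.cgenideal_eq_genideal by simp
    then show "principalideal (loc_ext R (carrier R - M) I) (loc_at R M)"
      using principalidealI[OF Lc.genideal_ideal[of "{W}"]] W by auto
  qed
qed


lemma (in cring) ideal_by:
  assumes sub: "I \<subseteq> carrier R" and z: "\<zero> \<in> I"
    and ad: "\<And>x y. x \<in> I \<Longrightarrow> y \<in> I \<Longrightarrow> x \<oplus> y \<in> I"
    and ml: "\<And>x r. x \<in> I \<Longrightarrow> r \<in> carrier R \<Longrightarrow> r \<otimes> x \<in> I"
  shows "ideal I R"
proof (rule idealI)
  show "ring R" by (rule ring_axioms)
  show "subgroup I (add_monoid R)"
  proof (rule subgroup.intro)
    show "I \<subseteq> carrier (add_monoid R)" using sub by simp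
    fix x y assume "x \<in> I" "y \<in> I" then show "x \<otimes>\<^bsub>add_monoid R\<^esub> y \<in> I" using ad by simp
  next
    show "\<one>\<^bsub>add_monoid R\<^esub> \<in> I" using z by simp
  next
    fix x assume x: "x \<in> I"
    then have xc: "x \<in> carrier R" using sub by blast
    have "(\<ominus> \<one>) \<otimes> x \<in> I" using ml x by simp
    moreover have "(\<ominus> \<one>) \<otimes> x = \<ominus> x" using xc by (simp add: l_minus)
    ultimately show "inv\<^bsub>add_monoid R\<^esub> x \<in> I" by (simp add: a_inv_def[symmetric])
  qed
next
  fix a x assume "a \<in> I" "x \<in> carrier R" then show "x \<otimes> a \<in> I" using ml by blast
next
  fix a x assume a: "a \<in> I" and x: "x \<in> carrier R"
  then have "x \<otimes> a \<in> I" using ml by blast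
  moreover have "a \<otimes> x = x \<otimes> a" using a x sub m_comm by blast
  ultimately show "a \<otimes> x \<in> I" by simp
qed

lemma (in cring) max_inv:
  assumes M: "maximalideal M R" and x: "x \<in> carrier R" "x \<notin> M"
  shows "\<exists>y\<in>carrier R. \<exists>n\<in>M. \<one> = x \<otimes> y \<oplus> n"
proof -
  have MI: "ideal M R" using M maximalideal.axioms(1) by blast
  have Mc: "M \<subseteq> carrier R" using ideal.Icarr[OF MI] by blast
  define K where "K = {x \<otimes> y \<oplus> n | y n. y \<in> carrier R \<and> n \<in> M}"
  have KI: "ideal K R"
  proof (rule ideal_by)
    show "K \<subseteq> carrier R" unfolding K_def using x Mc by blast
    have "\<zero> = x \<otimes> \<zero> \<oplus> \<zero>" using x by simp
    moreover have "\<zero> \<in> M" using additive_subgroup.zero_closed[OF ideal.axioms(1)[OF MI]] .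
    ultimately show "\<zero> \<in> K" unfolding K_def by blast
  next
    fix u v assume "u \<in> K" "v \<in> K"
    then obtain y1 n1 y2 n2 where h: "y1 \<in> carrier R" "n1 \<in> M" "u = x \<otimes> y1 \<oplus> n1"
       "y2 \<in> carrier R" "n2 \<in> M" "v = x \<otimes> y2 \<oplus> n2" unfolding K_def by blast
    have c: "n1 \<in> carrier R" "n2 \<in> carrier R" using h Mc by auto
    have "u \<oplus> v = x \<otimes> (y1 \<oplus> y2) \<oplus> (n1 \<oplus> n2)" using h(1,4) c x(1) unfolding h(3,6) by algebra
    moreover have "n1 \<oplus> n2 \<in> M" using additive_subgroup.a_closed[OF ideal.axioms(1)[OF MI]] h by blast
    ultimately show "u \<oplus> v \<in> K" unfolding K_def using h by blast
  next
    fix u r assume "u \<in> K" "r \<in> carrier R"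
    then obtain y1 n1 where h: "y1 \<in> carrier R" "n1 \<in> M" "u = x \<otimes> y1 \<oplus> n1" "r \<in> carrier R"
      unfolding K_def by blast
    have c: "n1 \<in> carrier R" using h Mc by auto
    have "r \<otimes> u = x \<otimes> (r \<otimes> y1) \<oplus> r \<otimes> n1" using h(1,4) c x(1) unfolding h(3) by algebra
    moreover have "r \<otimes> n1 \<in> M" using ideal.I_l_closed[OF MI] h by blast
    ultimately show "r \<otimes> u \<in> K" unfolding K_def using h by blast
  qed
  have MK: "M \<subseteq> K"
  proof
    fix n assume n: "n \<in> M"
    then have "n = x \<otimes> \<zero> \<oplus> n" using x Mc by auto
    then show "n \<in> K" unfolding K_def using n by blast
  qed
  have xK: "x \<in> K"
  proof -
    have "x = x \<otimes> \<one> \<oplus> \<zero>" using x by simp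
    moreover have "\<zero> \<in> M" using additive_subgroup.zero_closed[OF ideal.axioms(1)[OF MI]] .
    ultimately show ?thesis unfolding K_def by blast
  qed
  have "K \<subseteq> carrier R" using ideal.Icarr[OF KI] by blast
  then have "K = M \<or> K = carrier R" using maximalideal.I_maximal[OF M KI MK] by blast
  then have "K = carrier R" using xK x by blast
  then have "\<one> \<in> K" by simp
  then show ?thesis unfolding K_def by blast
qed

lemma (in cring) exists_max:
  assumes I: "ideal I R" and one: "\<one> \<notin> I"
  shows "\<exists>M. maximalideal M R \<and> I \<subseteq> M"
proof -
  define AA where "AA = {K. ideal K R \<and> I \<subseteq> K \<and> \<one> \<notin> K}"
  have "\<exists>M\<in>AA. \<forall>Xs\<in>AA. M \<subseteq> Xs \<longrightarrow> Xs = M"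
  proof (rule subset_Zorn)
    fix C assume C: "subset.chain AA C"
    show "\<exists>U\<in>AA. \<forall>Xs\<in>C. Xs \<subseteq> U"
    proof (cases "C = {}")
      case True
      then show ?thesis using I one unfolding AA_def by blast
    next
      case False
      have CA: "C \<subseteq> AA" and tot: "\<And>Xs Ys. Xs \<in> C \<Longrightarrow> Ys \<in> C \<Longrightarrow> Xs \<subseteq> Ys \<or> Ys \<subseteq> Xs"
        using C unfolding subset_chain_def by auto
      have Ci: "\<And>Xs. Xs \<in> C \<Longrightarrow> ideal Xs R" using CA unfolding AA_def by blast
      obtain X0 where X0: "X0 \<in> C" using False by blast
      have "ideal (\<Union>C) R"
      proof (rule ideal_by)
        show "\<Union>C \<subseteq> carrier R"
        proof
          fix x assume "x \<in> \<Union>C"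
          then obtain Xs where "Xs \<in> C" "x \<in> Xs" by blast
          then show "x \<in> carrier R" using ideal.Icarr[OF Ci] by blast
        qed
        have "\<zero> \<in> X0" using additive_subgroup.zero_closed[OF ideal.axioms(1)[OF Ci[OF X0]]] .
        then show "\<zero> \<in> \<Union>C" using X0 by blast
      next
        fix x y assume "x \<in> \<Union>C" "y \<in> \<Union>C"
        then obtain Xs Ys where XY: "Xs \<in> C" "Ys \<in> C" "x \<in> Xs" "y \<in> Ys" by blast
        from tot[OF XY(1,2)] show "x \<oplus> y \<in> \<Union>C"
        proof
          assume "Xs \<subseteq> Ys"
          then have "x \<oplus> y \<in> Ys" using XY additive_subgroup.a_closed[OF ideal.axioms(1)[OF Ci[OF XY(2)]]] by blast
          then show ?thesis using XY by blast
        next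
          assume "Ys \<subseteq> Xs"
          then have "x \<oplus> y \<in> Xs" using XY additive_subgroup.a_closed[OF ideal.axioms(1)[OF Ci[OF XY(1)]]] by blast
          then show ?thesis using XY by blast
        qed
      next
        fix x r assume "x \<in> \<Union>C" "r \<in> carrier R"
        then obtain Xs where h: "Xs \<in> C" "x \<in> Xs" "r \<in> carrier R" by blast
        then have "r \<otimes> x \<in> Xs" using ideal.I_l_closed[OF Ci[OF h(1)] h(2) h(3)] by blast
        then show "r \<otimes> x \<in> \<Union>C" using h by blast
      qed
      moreover have "I \<subseteq> \<Union>C" using X0 CA unfolding AA_def by blast
      moreover have "\<one> \<notin> \<Union>C" using CA unfolding AA_def by blast
      ultimately have "\<Union>C \<in> AA" unfolding AA_def by blast
      then show ?thesis by blast
    qed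
  qed
  then obtain M where M: "M \<in> AA" "\<And>Xs. Xs \<in> AA \<Longrightarrow> M \<subseteq> Xs \<Longrightarrow> Xs = M" by blast
  have MI: "ideal M R" "I \<subseteq> M" "\<one> \<notin> M" using M(1) unfolding AA_def by auto
  have "maximalideal M R"
  proof (rule maximalidealI[OF MI(1)])
    show "carrier R \<noteq> M" using MI(3) by blast
    fix J assume J: "ideal J R" "M \<subseteq> J" "J \<subseteq> carrier R"
    show "J = M \<or> J = carrier R"
    proof (cases "\<one> \<in> J")
      case True then show ?thesis using ideal.one_imp_carrier[OF J(1)] by blast
    next
      case False then have "J \<in> AA" unfolding AA_def using J MI by blast
      then show ?thesis using M(2) J by blast
    qed
  qed
  then show ?thesis using MI by blast
qed


locale amal = A: cring A + B: cring B for A (structure) and B (structure) +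
  fixes f J assumes hom: "f \<in> ring_hom A B" and JI: "ideal J B"

sublocale amal \<subseteq> h: ring_hom_ring A B f
  using ring_hom_ringI2[OF A.ring_axioms B.ring_axioms hom] .

context amal
begin

abbreviation "D \<equiv> amalgamation A B f J"

lemma D_mult: "(a1, b1) \<otimes>\<^bsub>D\<^esub> (a2, b2) = (a1 \<otimes> a2, b1 \<otimes>\<^bsub>B\<^esub> b2)"
  unfolding amalgamation_def RDirProd_def DirProd_def by (simp add: monoid.defs)
lemma D_add: "(a1, b1) \<oplus>\<^bsub>D\<^esub> (a2, b2) = (a1 \<oplus> a2, b1 \<oplus>\<^bsub>B\<^esub> b2)"
  unfolding amalgamation_def RDirProd_def DirProd_def by (simp add: monoid.defs)
lemma D_one: "\<one>\<^bsub>D\<^esub> = (\<one>, \<one>\<^bsub>B\<^esub>)"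
  unfolding amalgamation_def RDirProd_def DirProd_def by (simp add: monoid.defs)
lemma D_zero: "\<zero>\<^bsub>D\<^esub> = (\<zero>, \<zero>\<^bsub>B\<^esub>)"
  unfolding amalgamation_def RDirProd_def DirProd_def by (simp add: monoid.defs)
lemma D_carrier: "carrier D = {(a, f a \<oplus>\<^bsub>B\<^esub> j) | a j. a \<in> carrier A \<and> j \<in> J}"
  unfolding amalgamation_def by simp


lemma Jc: "J \<subseteq> carrier B" using ideal.Icarr[OF JI] by blast
lemma J0: "\<zero>\<^bsub>B\<^esub> \<in> J" using additive_subgroup.zero_closed[OF ideal.axioms(1)[OF JI]] .
lemma J_add: "x \<in> J \<Longrightarrow> y \<in> J \<Longrightarrow> x \<oplus>\<^bsub>B\<^esub> y \<in> J"
  using additive_subgroup.a_closed[OF ideal.axioms(1)[OF JI]] by blast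
lemma J_l: "x \<in> J \<Longrightarrow> r \<in> carrier B \<Longrightarrow> r \<otimes>\<^bsub>B\<^esub> x \<in> J" using ideal.I_l_closed[OF JI] by blast
lemma J_r: "x \<in> J \<Longrightarrow> r \<in> carrier B \<Longrightarrow> x \<otimes>\<^bsub>B\<^esub> r \<in> J" using ideal.I_r_closed[OF JI] by blast
lemma J_neg: "x \<in> J \<Longrightarrow> \<ominus>\<^bsub>B\<^esub> x \<in> J"
proof -
  assume x: "x \<in> J"
  then have "(\<ominus>\<^bsub>B\<^esub> \<one>\<^bsub>B\<^esub>) \<otimes>\<^bsub>B\<^esub> x \<in> J" using J_l by simp
  moreover have "(\<ominus>\<^bsub>B\<^esub> \<one>\<^bsub>B\<^esub>) \<otimes>\<^bsub>B\<^esub> x = \<ominus>\<^bsub>B\<^esub> x" using x Jc B.l_minus by auto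
  ultimately show ?thesis by simp
qed
lemma Jcarr: "x \<in> J \<Longrightarrow> x \<in> carrier B" using Jc by blast

lemma D_mem: "(a, b) \<in> carrier D \<longleftrightarrow> a \<in> carrier A \<and> b \<in> carrier B \<and> b \<ominus>\<^bsub>B\<^esub> f a \<in> J"
proof
  assume "(a, b) \<in> carrier D"
  then obtain j where j: "a \<in> carrier A" "j \<in> J" "b = f a \<oplus>\<^bsub>B\<^esub> j" unfolding D_carrier by blast
  have "b \<ominus>\<^bsub>B\<^esub> f a = j" using j Jcarr[OF j(2)] h.hom_closed[OF j(1)] by (simp, insert Jcarr[OF j(2)] h.hom_closed[OF j(1)], algebra)
  then show "a \<in> carrier A \<and> b \<in> carrier B \<and> b \<ominus>\<^bsub>B\<^esub> f a \<in> J"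
    using j Jcarr[OF j(2)] h.hom_closed[OF j(1)] by simp
next
  assume h: "a \<in> carrier A \<and> b \<in> carrier B \<and> b \<ominus>\<^bsub>B\<^esub> f a \<in> J"
  then have "b = f a \<oplus>\<^bsub>B\<^esub> (b \<ominus>\<^bsub>B\<^esub> f a)" using h.hom_closed[of a] by (insert h.hom_closed[of a], algebra)
  then show "(a, b) \<in> carrier D" unfolding D_carrier using h by blast
qed

lemma D_memI: "a \<in> carrier A \<Longrightarrow> j \<in> J \<Longrightarrow> (a, f a \<oplus>\<^bsub>B\<^esub> j) \<in> carrier D"
  unfolding D_carrier by blast

lemma D_fa: "a \<in> carrier A \<Longrightarrow> (a, f a) \<in> carrier D"
  using D_memI[of a "\<zero>\<^bsub>B\<^esub>"] J0 h.hom_closed by simp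

lemma D_0j: "j \<in> J \<Longrightarrow> (\<zero>, j) \<in> carrier D"
  using D_memI[of \<zero> j] Jcarr by simp

lemma D_cases:
  assumes "x \<in> carrier D"
  obtains a j where "a \<in> carrier A" "j \<in> J" "x = (a, f a \<oplus>\<^bsub>B\<^esub> j)"
  using assms unfolding D_carrier by blast

lemma D_cases2:
  assumes "x \<in> carrier D"
  obtains a b where "a \<in> carrier A" "b \<in> carrier B" "b \<ominus>\<^bsub>B\<^esub> f a \<in> J" "x = (a, b)"
  using assms D_mem by (cases x) blast

lemma D_cring: "cring D"
proof (rule cringI)
  show "abelian_group D"
  proof (rule abelian_groupI)
    fix x y assume "x \<in> carrier D" "y \<in> carrier D"
    then obtain a1 j1 a2 j2 where h: "a1 \<in> carrier A" "j1 \<in> J" "x = (a1, f a1 \<oplus>\<^bsub>B\<^esub> j1)"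
      "a2 \<in> carrier A" "j2 \<in> J" "y = (a2, f a2 \<oplus>\<^bsub>B\<^esub> j2)" by (metis D_cases)
    have "x \<oplus>\<^bsub>D\<^esub> y = (a1 \<oplus> a2, f (a1 \<oplus> a2) \<oplus>\<^bsub>B\<^esub> (j1 \<oplus>\<^bsub>B\<^esub> j2))"
      using h Jcarr[OF h(2)] Jcarr[OF h(5)] h.hom_closed[OF h(1)] h.hom_closed[OF h(4)]
      by (simp add: D_add, insert Jcarr[OF h(2)] Jcarr[OF h(5)] h.hom_closed[OF h(1)] h.hom_closed[OF h(4)], algebra)
    then show "x \<oplus>\<^bsub>D\<^esub> y \<in> carrier D" using D_memI[OF A.a_closed[OF h(1,4)] J_add[OF h(2,5)]] by simp
  next
    show "\<zero>\<^bsub>D\<^esub> \<in> carrier D" using D_zero D_0j J0 by simp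
  next
    fix x y z assume "x \<in> carrier D" "y \<in> carrier D" "z \<in> carrier D"
    then show "x \<oplus>\<^bsub>D\<^esub> y \<oplus>\<^bsub>D\<^esub> z = x \<oplus>\<^bsub>D\<^esub> (y \<oplus>\<^bsub>D\<^esub> z)"
      by (elim D_cases2) (simp add: D_add A.a_assoc B.a_assoc)
  next
    fix x y assume "x \<in> carrier D" "y \<in> carrier D"
    then show "x \<oplus>\<^bsub>D\<^esub> y = y \<oplus>\<^bsub>D\<^esub> x"
      by (elim D_cases2) (simp add: D_add A.a_comm B.a_comm)
  next
    fix x assume "x \<in> carrier D"
    then show "\<zero>\<^bsub>D\<^esub> \<oplus>\<^bsub>D\<^esub> x = x"
      by (elim D_cases2) (simp add: D_add D_zero)
  next
    fix x assume "x \<in> carrier D"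
    then obtain a b where h: "a \<in> carrier A" "b \<in> carrier B" "b \<ominus>\<^bsub>B\<^esub> f a \<in> J" "x = (a, b)"
      by (elim D_cases2)
    have "(\<ominus> a, \<ominus>\<^bsub>B\<^esub> b) \<in> carrier D"
    proof -
      have "\<ominus>\<^bsub>B\<^esub> b \<ominus>\<^bsub>B\<^esub> f (\<ominus> a) = \<ominus>\<^bsub>B\<^esub> (b \<ominus>\<^bsub>B\<^esub> f a)"
        using h h.hom_closed[OF h(1)] by (simp add: h.hom_a_inv, insert h h.hom_closed[OF h(1)], algebra)
      then show ?thesis using D_mem h J_neg by simp
    qed
    moreover have "(\<ominus> a, \<ominus>\<^bsub>B\<^esub> b) \<oplus>\<^bsub>D\<^esub> x = \<zero>\<^bsub>D\<^esub>" using h by (simp add: D_add D_zero A.l_neg B.l_neg)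
    ultimately show "\<exists>y\<in>carrier D. y \<oplus>\<^bsub>D\<^esub> x = \<zero>\<^bsub>D\<^esub>" by blast
  qed
next
  show "comm_monoid D"
  proof (rule comm_monoidI)
    fix x y assume "x \<in> carrier D" "y \<in> carrier D"
    then obtain a1 b1 a2 b2 where h: "a1 \<in> carrier A" "b1 \<in> carrier B" "b1 \<ominus>\<^bsub>B\<^esub> f a1 \<in> J" "x = (a1, b1)"
      "a2 \<in> carrier A" "b2 \<in> carrier B" "b2 \<ominus>\<^bsub>B\<^esub> f a2 \<in> J" "y = (a2, b2)" by (metis D_cases2)
    have "b1 \<otimes>\<^bsub>B\<^esub> b2 \<ominus>\<^bsub>B\<^esub> f (a1 \<otimes> a2) =
       (b1 \<ominus>\<^bsub>B\<^esub> f a1) \<otimes>\<^bsub>B\<^esub> b2 \<oplus>\<^bsub>B\<^esub> f a1 \<otimes>\<^bsub>B\<^esub> (b2 \<ominus>\<^bsub>B\<^esub> f a2)"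
      using h(1,2,5,6) h.hom_closed[OF h(1)] h.hom_closed[OF h(5)] by (simp add: h.hom_mult, insert h(1,2,5,6) h.hom_closed[OF h(1)] h.hom_closed[OF h(5)], algebra)
    moreover have "(b1 \<ominus>\<^bsub>B\<^esub> f a1) \<otimes>\<^bsub>B\<^esub> b2 \<oplus>\<^bsub>B\<^esub> f a1 \<otimes>\<^bsub>B\<^esub> (b2 \<ominus>\<^bsub>B\<^esub> f a2) \<in> J"
      using J_add J_l J_r h h.hom_closed by simp
    ultimately show "x \<otimes>\<^bsub>D\<^esub> y \<in> carrier D" using h D_mem by (simp add: D_mult)
  next
    show "\<one>\<^bsub>D\<^esub> \<in> carrier D" using D_one D_fa[of \<one>] by simp
  next
    fix x y z assume "x \<in> carrier D" "y \<in> carrier D" "z \<in> carrier D"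
    then show "x \<otimes>\<^bsub>D\<^esub> y \<otimes>\<^bsub>D\<^esub> z = x \<otimes>\<^bsub>D\<^esub> (y \<otimes>\<^bsub>D\<^esub> z)"
      by (elim D_cases2) (simp add: D_mult A.m_assoc B.m_assoc)
  next
    fix x assume "x \<in> carrier D"
    then show "\<one>\<^bsub>D\<^esub> \<otimes>\<^bsub>D\<^esub> x = x"
      by (elim D_cases2) (simp add: D_mult D_one)
  next
    fix x y assume "x \<in> carrier D" "y \<in> carrier D"
    then show "x \<otimes>\<^bsub>D\<^esub> y = y \<otimes>\<^bsub>D\<^esub> x"
      by (elim D_cases2) (simp add: D_mult A.m_comm B.m_comm)
  qed
next
  fix x y z assume "x \<in> carrier D" "y \<in> carrier D" "z \<in> carrier D"
  then show "(x \<oplus>\<^bsub>D\<^esub> y) \<otimes>\<^bsub>D\<^esub> z = x \<otimes>\<^bsub>D\<^esub> z \<oplus>\<^bsub>D\<^esub> y \<otimes>\<^bsub>D\<^esub> z"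
    by (elim D_cases2) (simp add: D_mult D_add A.l_distr B.l_distr)
qed

end

sublocale amal \<subseteq> Dc: cring "amalgamation A B f J" by (rule D_cring)

context amal
begin

definition Mp where "Mp M = {x \<in> carrier D. fst x \<in> M}"
definition Np where "Np N = {x \<in> carrier D. snd x \<in> N}"

lemma max_facts:
  assumes "maximalideal M R"
  shows "ideal M R" "M \<subseteq> carrier R" "\<one>\<^bsub>R\<^esub> \<notin> M"
    "\<And>x y. x \<in> M \<Longrightarrow> y \<in> M \<Longrightarrow> x \<oplus>\<^bsub>R\<^esub> y \<in> M"
    "\<And>x r. x \<in> M \<Longrightarrow> r \<in> carrier R \<Longrightarrow> r \<otimes>\<^bsub>R\<^esub> x \<in> M"
    "\<And>x r. x \<in> M \<Longrightarrow> r \<in> carrier R \<Longrightarrow> x \<otimes>\<^bsub>R\<^esub> r \<in> M"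
    "\<zero>\<^bsub>R\<^esub> \<in> M"
proof -
  show MI: "ideal M R" using assms maximalideal.axioms(1) by blast
  show "M \<subseteq> carrier R" using ideal.Icarr[OF MI] by blast
  show "\<one>\<^bsub>R\<^esub> \<notin> M" using ideal.one_imp_carrier[OF MI] maximalideal.I_notcarr[OF assms] by blast
  show "\<And>x y. x \<in> M \<Longrightarrow> y \<in> M \<Longrightarrow> x \<oplus>\<^bsub>R\<^esub> y \<in> M"
    using additive_subgroup.a_closed[OF ideal.axioms(1)[OF MI]] by blast
  show "\<And>x r. x \<in> M \<Longrightarrow> r \<in> carrier R \<Longrightarrow> r \<otimes>\<^bsub>R\<^esub> x \<in> M" using ideal.I_l_closed[OF MI] by blast
  show "\<And>x r. x \<in> M \<Longrightarrow> r \<in> carrier R \<Longrightarrow> x \<otimes>\<^bsub>R\<^esub> r \<in> M" using ideal.I_r_closed[OF MI] by blast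
  show "\<zero>\<^bsub>R\<^esub> \<in> M" using additive_subgroup.zero_closed[OF ideal.axioms(1)[OF MI]] .
qed

lemma Mp_ideal:
  assumes I: "ideal M A"
  shows "ideal (Mp M) D"
proof (rule Dc.ideal_by)
  show "Mp M \<subseteq> carrier D" unfolding Mp_def by blast
  show "\<zero>\<^bsub>D\<^esub> \<in> Mp M" unfolding Mp_def using D_zero Dc.zero_closed
      additive_subgroup.zero_closed[OF ideal.axioms(1)[OF I]] by simp
next
  fix x y assume "x \<in> Mp M" "y \<in> Mp M"
  then show "x \<oplus>\<^bsub>D\<^esub> y \<in> Mp M" unfolding Mp_def
    using additive_subgroup.a_closed[OF ideal.axioms(1)[OF I]]
    by (auto elim!: D_cases2 simp: D_add)
next
  fix x r assume "x \<in> Mp M" "r \<in> carrier D"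
  then show "r \<otimes>\<^bsub>D\<^esub> x \<in> Mp M" unfolding Mp_def
    using ideal.I_l_closed[OF I] by (auto elim!: D_cases2 simp: D_mult)
qed

lemma Np_ideal:
  assumes I: "ideal N B"
  shows "ideal (Np N) D"
proof (rule Dc.ideal_by)
  show "Np N \<subseteq> carrier D" unfolding Np_def by blast
  show "\<zero>\<^bsub>D\<^esub> \<in> Np N" unfolding Np_def using D_zero Dc.zero_closed
      additive_subgroup.zero_closed[OF ideal.axioms(1)[OF I]] by simp
next
  fix x y assume "x \<in> Np N" "y \<in> Np N"
  then show "x \<oplus>\<^bsub>D\<^esub> y \<in> Np N" unfolding Np_def
    using additive_subgroup.a_closed[OF ideal.axioms(1)[OF I]]
    by (auto elim!: D_cases2 simp: D_add)
next
  fix x r assume "x \<in> Np N" "r \<in> carrier D"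
  then show "r \<otimes>\<^bsub>D\<^esub> x \<in> Np N" unfolding Np_def
    using ideal.I_l_closed[OF I] by (auto elim!: D_cases2 simp: D_mult)
qed

lemma Mp_max:
  assumes M: "maximalideal M A"
  shows "maximalideal (Mp M) D"
proof (rule maximalidealI)
  note mf = max_facts[OF M]
  show MI: "ideal (Mp M) D" using Mp_ideal[OF mf(1)] .
  show "carrier D \<noteq> Mp M"
  proof
    assume eq: "carrier D = Mp M"
    have "(\<one>, \<one>\<^bsub>B\<^esub>) \<in> Mp M" using Dc.one_closed D_one eq by simp
    then show False using mf(3) unfolding Mp_def by simp
  qed
  fix Q assume Q: "ideal Q D" "Mp M \<subseteq> Q" "Q \<subseteq> carrier D"
  show "Q = Mp M \<or> Q = carrier D"
  proof (cases "Q = Mp M")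
    case False
    then obtain q where q: "q \<in> Q" "q \<notin> Mp M" using Q by blast
    then obtain a b where ab: "a \<in> carrier A" "b \<in> carrier B" "b \<ominus>\<^bsub>B\<^esub> f a \<in> J" "q = (a, b)"
      using Q(3) by (blast elim: D_cases2)
    have aM: "a \<notin> M" using q ab Q unfolding Mp_def by auto
    define Q1 where "Q1 = {x \<in> carrier A. \<exists>y. (x, y) \<in> Q}"
    have Q1I: "ideal Q1 A"
    proof (rule A.ideal_by)
      show "Q1 \<subseteq> carrier A" unfolding Q1_def by blast
      show "\<zero> \<in> Q1" unfolding Q1_def using additive_subgroup.zero_closed[OF ideal.axioms(1)[OF Q(1)]] D_zero by auto
    next
      fix x y assume "x \<in> Q1" "y \<in> Q1"
      then obtain x2 y2 where h: "x \<in> carrier A" "(x, x2) \<in> Q" "y \<in> carrier A" "(y, y2) \<in> Q" unfolding Q1_def by blast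
      then have "(x, x2) \<oplus>\<^bsub>D\<^esub> (y, y2) \<in> Q" using additive_subgroup.a_closed[OF ideal.axioms(1)[OF Q(1)]] by blast
      then show "x \<oplus> y \<in> Q1" unfolding Q1_def using h by (auto simp: D_add)
    next
      fix x r assume "x \<in> Q1" "r \<in> carrier A"
      then obtain x2 where h: "x \<in> carrier A" "(x, x2) \<in> Q" "r \<in> carrier A" unfolding Q1_def by blast
      then have "(r, f r) \<otimes>\<^bsub>D\<^esub> (x, x2) \<in> Q" using ideal.I_l_closed[OF Q(1)] D_fa by blast
      then show "r \<otimes> x \<in> Q1" unfolding Q1_def using h by (auto simp: D_mult)
    qed
    have MQ1: "M \<subseteq> Q1"
    proof
      fix m assume m: "m \<in> M"
      then have "(m, f m) \<in> Mp M" unfolding Mp_def using D_fa mf(2) by auto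
      then show "m \<in> Q1" unfolding Q1_def using Q m mf(2) by blast
    qed
    have "a \<in> Q1" unfolding Q1_def using q ab by blast
    then have "Q1 = carrier A" using maximalideal.I_maximal[OF M Q1I MQ1] aM ideal.Icarr[OF Q1I] by blast
    then obtain y where y: "(\<one>, y) \<in> Q" unfolding Q1_def by blast
    then have yc: "y \<in> carrier B" "y \<ominus>\<^bsub>B\<^esub> \<one>\<^bsub>B\<^esub> \<in> J" using Q(3) D_mem by auto
    have "\<one>\<^bsub>B\<^esub> \<ominus>\<^bsub>B\<^esub> y = \<ominus>\<^bsub>B\<^esub> (y \<ominus>\<^bsub>B\<^esub> \<one>\<^bsub>B\<^esub>)" using yc by (insert yc(1), algebra)
    then have "\<one>\<^bsub>B\<^esub> \<ominus>\<^bsub>B\<^esub> y \<in> J" using J_neg yc by simp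
    then have "(\<zero>, \<one>\<^bsub>B\<^esub> \<ominus>\<^bsub>B\<^esub> y) \<in> Mp M" unfolding Mp_def using D_0j mf(7) by simp
    then have "(\<one>, y) \<oplus>\<^bsub>D\<^esub> (\<zero>, \<one>\<^bsub>B\<^esub> \<ominus>\<^bsub>B\<^esub> y) \<in> Q"
      using y Q(2) additive_subgroup.a_closed[OF ideal.axioms(1)[OF Q(1)]] by blast
    moreover have "(\<one>, y) \<oplus>\<^bsub>D\<^esub> (\<zero>, \<one>\<^bsub>B\<^esub> \<ominus>\<^bsub>B\<^esub> y) = \<one>\<^bsub>D\<^esub>"
      using yc by (simp add: D_add D_one, insert yc(1), algebra)
    ultimately have "\<one>\<^bsub>D\<^esub> \<in> Q" by simp
    then show ?thesis using ideal.one_imp_carrier[OF Q(1)] by blast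
  qed simp
qed

lemma Np_max:
  assumes N: "maximalideal N B" and j0: "j0 \<in> J" "j0 \<notin> N"
  shows "maximalideal (Np N) D"
proof (rule maximalidealI)
  note mf = max_facts[OF N]
  show MI: "ideal (Np N) D" using Np_ideal[OF mf(1)] .
  show "carrier D \<noteq> Np N"
  proof
    assume eq: "carrier D = Np N"
    have "(\<one>, \<one>\<^bsub>B\<^esub>) \<in> Np N" using Dc.one_closed D_one eq by simp
    then show False using mf(3) unfolding Np_def by simp
  qed
  fix Q assume Q: "ideal Q D" "Np N \<subseteq> Q" "Q \<subseteq> carrier D"
  have Qadd: "\<And>x y. x \<in> Q \<Longrightarrow> y \<in> Q \<Longrightarrow> x \<oplus>\<^bsub>D\<^esub> y \<in> Q"
    using additive_subgroup.a_closed[OF ideal.axioms(1)[OF Q(1)]] by blast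
  show "Q = Np N \<or> Q = carrier D"
  proof (cases "Q = Np N")
    case False
    then obtain q where q: "q \<in> Q" "q \<notin> Np N" using Q by blast
    then obtain a b where ab: "a \<in> carrier A" "b \<in> carrier B" "b \<ominus>\<^bsub>B\<^esub> f a \<in> J" "q = (a, b)"
      using Q(3) by (blast elim: D_cases2)
    have bN: "b \<notin> N" using q ab Q unfolding Np_def by auto
    obtain y n where yn: "y \<in> carrier B" "n \<in> N" "\<one>\<^bsub>B\<^esub> = b \<otimes>\<^bsub>B\<^esub> y \<oplus>\<^bsub>B\<^esub> n"
      using B.max_inv[OF N ab(2) bN] by blast
    have j0c: "j0 \<in> carrier B" using Jcarr j0 by simp
    obtain z n' where zn: "z \<in> carrier B" "n' \<in> N" "\<one>\<^bsub>B\<^esub> = j0 \<otimes>\<^bsub>B\<^esub> z \<oplus>\<^bsub>B\<^esub> n'"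
      using B.max_inv[OF N j0c j0(2)] by blast
    have nc: "n \<in> carrier B" "n' \<in> carrier B" using yn zn mf(2) by auto
    have J1: "y \<otimes>\<^bsub>B\<^esub> j0 \<otimes>\<^bsub>B\<^esub> z \<in> J" using J_l J_r j0 yn zn by simp
    have X1: "q \<otimes>\<^bsub>D\<^esub> (\<zero>, y \<otimes>\<^bsub>B\<^esub> j0 \<otimes>\<^bsub>B\<^esub> z) \<in> Q"
      using ideal.I_r_closed[OF Q(1) q(1) D_0j[OF J1]] .
    have e1: "q \<otimes>\<^bsub>D\<^esub> (\<zero>, y \<otimes>\<^bsub>B\<^esub> j0 \<otimes>\<^bsub>B\<^esub> z) = (\<zero>, b \<otimes>\<^bsub>B\<^esub> (y \<otimes>\<^bsub>B\<^esub> j0 \<otimes>\<^bsub>B\<^esub> z))"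
      using ab by (simp add: D_mult)
    have J2: "n \<otimes>\<^bsub>B\<^esub> (j0 \<otimes>\<^bsub>B\<^esub> z) \<in> J" using J_l[OF J_r[OF j0(1) zn(1)] nc(1)] .
    have X2: "(\<zero>, n \<otimes>\<^bsub>B\<^esub> (j0 \<otimes>\<^bsub>B\<^esub> z)) \<in> Q"
      using Q(2) D_0j[OF J2] mf(6)[OF yn(2)] j0c zn unfolding Np_def by auto
    have e2: "(\<zero>, b \<otimes>\<^bsub>B\<^esub> (y \<otimes>\<^bsub>B\<^esub> j0 \<otimes>\<^bsub>B\<^esub> z)) \<oplus>\<^bsub>D\<^esub> (\<zero>, n \<otimes>\<^bsub>B\<^esub> (j0 \<otimes>\<^bsub>B\<^esub> z)) = (\<zero>, (b \<otimes>\<^bsub>B\<^esub> y \<oplus>\<^bsub>B\<^esub> n) \<otimes>\<^bsub>B\<^esub> (j0 \<otimes>\<^bsub>B\<^esub> z))"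
      by (simp add: D_add, insert ab(2) yn(1) nc j0c zn(1), algebra)
    have "b \<otimes>\<^bsub>B\<^esub> y \<oplus>\<^bsub>B\<^esub> n = \<one>\<^bsub>B\<^esub>" using yn(3) by simp
    then have e3: "(b \<otimes>\<^bsub>B\<^esub> y \<oplus>\<^bsub>B\<^esub> n) \<otimes>\<^bsub>B\<^esub> (j0 \<otimes>\<^bsub>B\<^esub> z) = j0 \<otimes>\<^bsub>B\<^esub> z"
      using j0c zn(1) by simp
    have X12: "(\<zero>, j0 \<otimes>\<^bsub>B\<^esub> z) \<in> Q"
      using Qadd[OF X1 X2] unfolding e1 e2 e3 .
    have X3: "(\<one>, n') \<in> Q"
    proof -
      have "n' \<ominus>\<^bsub>B\<^esub> f \<one> = \<ominus>\<^bsub>B\<^esub> (j0 \<otimes>\<^bsub>B\<^esub> z)"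
      proof -
        have "n' \<ominus>\<^bsub>B\<^esub> f \<one> = n' \<ominus>\<^bsub>B\<^esub> (j0 \<otimes>\<^bsub>B\<^esub> z \<oplus>\<^bsub>B\<^esub> n')" using zn(3) by simp
        also have "\<dots> = \<ominus>\<^bsub>B\<^esub> (j0 \<otimes>\<^bsub>B\<^esub> z)" by (insert nc j0c zn(1), algebra)
        finally show ?thesis .
      qed
      moreover have "\<ominus>\<^bsub>B\<^esub> (j0 \<otimes>\<^bsub>B\<^esub> z) \<in> J" using J_neg J_r j0 zn by simp
      ultimately have "(\<one>, n') \<in> carrier D" using D_mem nc by simp
      then show ?thesis using Q(2) zn(2) unfolding Np_def by auto
    qed
    have "(\<one>, n') \<oplus>\<^bsub>D\<^esub> (\<zero>, j0 \<otimes>\<^bsub>B\<^esub> z) = \<one>\<^bsub>D\<^esub>"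
      using zn(3) by (simp add: D_add D_one, insert nc j0c zn(1), algebra)
    then have "\<one>\<^bsub>D\<^esub> \<in> Q" using Qadd[OF X3 X12] by simp
    then show ?thesis using ideal.one_imp_carrier[OF Q(1)] by blast
  qed simp
qed

end

context amal
begin

lemma max_class:
  assumes P: "maximalideal P D"
  shows "(\<exists>M. maximalideal M A \<and> P = Mp M) \<or> (\<exists>N. maximalideal N B \<and> \<not> J \<subseteq> N \<and> P = Np N)"
proof -
  note mf = max_facts[OF P]
  have Psub: "P \<subseteq> carrier D" using mf(2) .
  show ?thesis
  proof (cases "\<forall>j\<in>J. (\<zero>, j) \<in> P")
    case True
    define M0 where "M0 = {a \<in> carrier A. (a, f a) \<in> P}"
    have M0I: "ideal M0 A"
    proof (rule A.ideal_by)
      show "M0 \<subseteq> carrier A" unfolding M0_def by blast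
      show "\<zero> \<in> M0" unfolding M0_def using mf(7) D_zero by simp
    next
      fix x y assume "x \<in> M0" "y \<in> M0"
      then have h: "x \<in> carrier A" "y \<in> carrier A" "(x, f x) \<in> P" "(y, f y) \<in> P" unfolding M0_def by auto
      have "(x, f x) \<oplus>\<^bsub>D\<^esub> (y, f y) \<in> P" using mf(4) h by blast
      then show "x \<oplus> y \<in> M0" unfolding M0_def using h by (simp add: D_add)
    next
      fix x r assume "x \<in> M0" "r \<in> carrier A"
      then have h: "x \<in> carrier A" "r \<in> carrier A" "(x, f x) \<in> P" unfolding M0_def by auto
      have "(r, f r) \<otimes>\<^bsub>D\<^esub> (x, f x) \<in> P" using mf(5) h D_fa by blast
      then show "r \<otimes> x \<in> M0" unfolding M0_def using h by (simp add: D_mult)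
    qed
    have "\<one> \<notin> M0" unfolding M0_def using mf(3) D_one by simp
    then obtain M2 where M2: "maximalideal M2 A" "M0 \<subseteq> M2" using A.exists_max[OF M0I] by blast
    have PM: "P \<subseteq> Mp M2"
    proof
      fix x assume xP: "x \<in> P"
      then obtain a j where aj: "a \<in> carrier A" "j \<in> J" "x = (a, f a \<oplus>\<^bsub>B\<^esub> j)" using Psub by (blast elim: D_cases)
      have "(\<zero>, \<ominus>\<^bsub>B\<^esub> j) \<in> P" using True J_neg aj by blast
      then have "x \<oplus>\<^bsub>D\<^esub> (\<zero>, \<ominus>\<^bsub>B\<^esub> j) \<in> P" using mf(4) xP by blast
      moreover have "x \<oplus>\<^bsub>D\<^esub> (\<zero>, \<ominus>\<^bsub>B\<^esub> j) = (a, f a)"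
        using aj by (simp add: D_add, insert Jcarr[OF aj(2)] h.hom_closed[OF aj(1)], algebra)
      ultimately have "a \<in> M0" unfolding M0_def using aj by simp
      then show "x \<in> Mp M2" unfolding Mp_def using M2 xP Psub aj by auto
    qed
    have "Mp M2 = P \<or> Mp M2 = carrier D"
      using maximalideal.I_maximal[OF P Mp_ideal[OF max_facts(1)[OF M2(1)]] PM] unfolding Mp_def by blast
    moreover have "Mp M2 \<noteq> carrier D" using maximalideal.I_notcarr[OF Mp_max[OF M2(1)]] by simp
    ultimately show ?thesis using M2 by auto
  next
    case False
    then obtain j0 where j0: "j0 \<in> J" "(\<zero>, j0) \<notin> P" by blast
    have j0c: "j0 \<in> carrier B" using Jcarr j0 by simp
    have prime: "\<And>x y. x \<in> carrier D \<Longrightarrow> y \<in> carrier D \<Longrightarrow> x \<otimes>\<^bsub>D\<^esub> y \<in> P \<Longrightarrow> x \<in> P \<or> y \<in> P"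
      using primeideal.I_prime[OF Dc.maximalideal_prime[OF P]] by blast
    define N0 where "N0 = {y \<in> carrier B. (\<zero>, y \<otimes>\<^bsub>B\<^esub> j0) \<in> P}"
    have N0I: "ideal N0 B"
    proof (rule B.ideal_by)
      show "N0 \<subseteq> carrier B" unfolding N0_def by blast
      show "\<zero>\<^bsub>B\<^esub> \<in> N0" unfolding N0_def using mf(7) D_zero j0c by simp
    next
      fix x y assume "x \<in> N0" "y \<in> N0"
      then have h: "x \<in> carrier B" "y \<in> carrier B" "(\<zero>, x \<otimes>\<^bsub>B\<^esub> j0) \<in> P" "(\<zero>, y \<otimes>\<^bsub>B\<^esub> j0) \<in> P"
        unfolding N0_def by auto
      have "(\<zero>, x \<otimes>\<^bsub>B\<^esub> j0) \<oplus>\<^bsub>D\<^esub> (\<zero>, y \<otimes>\<^bsub>B\<^esub> j0) \<in> P" using mf(4) h by blast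
      then show "x \<oplus>\<^bsub>B\<^esub> y \<in> N0" unfolding N0_def using h j0c by (simp add: D_add B.l_distr)
    next
      fix x r assume "x \<in> N0" "r \<in> carrier B"
      then have h: "x \<in> carrier B" "r \<in> carrier B" "(\<zero>, x \<otimes>\<^bsub>B\<^esub> j0) \<in> P" unfolding N0_def by auto
      have c1: "(\<zero>, r \<otimes>\<^bsub>B\<^esub> j0) \<in> carrier D" using D_0j J_l j0 h by simp
      have c2: "(\<zero>, r \<otimes>\<^bsub>B\<^esub> x \<otimes>\<^bsub>B\<^esub> j0) \<in> carrier D" using D_0j J_l j0 h by simp
      have c3: "(\<zero>, j0) \<in> carrier D" using D_0j j0 by simp
      have "(\<zero>, r \<otimes>\<^bsub>B\<^esub> j0) \<otimes>\<^bsub>D\<^esub> (\<zero>, x \<otimes>\<^bsub>B\<^esub> j0) \<in> P" using mf(5) h c1 by blast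
      moreover have "(\<zero>, r \<otimes>\<^bsub>B\<^esub> j0) \<otimes>\<^bsub>D\<^esub> (\<zero>, x \<otimes>\<^bsub>B\<^esub> j0) = (\<zero>, r \<otimes>\<^bsub>B\<^esub> x \<otimes>\<^bsub>B\<^esub> j0) \<otimes>\<^bsub>D\<^esub> (\<zero>, j0)"
        by (simp add: D_mult, insert h(1,2) j0c, algebra)
      ultimately have "(\<zero>, r \<otimes>\<^bsub>B\<^esub> x \<otimes>\<^bsub>B\<^esub> j0) \<in> P" using prime[OF c2 c3] j0 by simp
      then show "r \<otimes>\<^bsub>B\<^esub> x \<in> N0" unfolding N0_def using h by simp
    qed
    have "\<one>\<^bsub>B\<^esub> \<notin> N0" unfolding N0_def using j0 j0c by simp
    then obtain N2 where N2: "maximalideal N2 B" "N0 \<subseteq> N2" using B.exists_max[OF N0I] by blast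
    have PN: "P \<subseteq> Np N2"
    proof
      fix x assume xP: "x \<in> P"
      then obtain a b where ab: "a \<in> carrier A" "b \<in> carrier B" "b \<ominus>\<^bsub>B\<^esub> f a \<in> J" "x = (a, b)"
        using Psub by (blast elim: D_cases2)
      have "x \<otimes>\<^bsub>D\<^esub> (\<zero>, j0) \<in> P" using mf(6) xP D_0j j0 by blast
      then have "b \<in> N0" unfolding N0_def using ab by (simp add: D_mult)
      then show "x \<in> Np N2" unfolding Np_def using N2 xP Psub ab by auto
    qed
    have "Np N2 = P \<or> Np N2 = carrier D"
      using maximalideal.I_maximal[OF P Np_ideal[OF max_facts(1)[OF N2(1)]] PN] unfolding Np_def by blast
    moreover have "Np N2 \<noteq> carrier D"
    proof
      assume "Np N2 = carrier D"
      then have "(\<one>, \<one>\<^bsub>B\<^esub>) \<in> Np N2" using Dc.one_closed D_one by simp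
      then show False using max_facts(3)[OF N2(1)] unfolding Np_def by simp
    qed
    ultimately have PE: "P = Np N2" by auto
    have "j0 \<notin> N2"
    proof
      assume "j0 \<in> N2"
      then have "(\<zero>, j0) \<in> Np N2" unfolding Np_def using D_0j j0 by simp
      then show False using PE j0 by simp
    qed
    then show ?thesis using N2 PE j0 by blast
  qed
qed


lemma primeA: "maximalideal M A \<Longrightarrow> x \<in> carrier A - M \<Longrightarrow> y \<in> carrier A - M \<Longrightarrow> x \<otimes> y \<in> carrier A - M"
  using primeideal.I_prime[OF A.maximalideal_prime] by blast
lemma primeB: "maximalideal N B \<Longrightarrow> x \<in> carrier B - N \<Longrightarrow> y \<in> carrier B - N \<Longrightarrow> x \<otimes>\<^bsub>B\<^esub> y \<in> carrier B - N"
  using primeideal.I_prime[OF B.maximalideal_prime] by blast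

lemma S_msub:
  assumes M: "maximalideal M A"
  shows "msub B (amal_S A B f J M)"
proof -
  note mf = max_facts[OF M]
  show ?thesis
  proof (unfold msub_def msub_axioms_def, intro conjI)
    show "cring B" by (rule B.is_cring)
    show "amal_S A B f J M \<subseteq> carrier B" unfolding amal_S_def using Jcarr h.hom_closed by blast
    have "\<one>\<^bsub>B\<^esub> = f \<one> \<oplus>\<^bsub>B\<^esub> \<zero>\<^bsub>B\<^esub>" by simp
    then show "\<one>\<^bsub>B\<^esub> \<in> amal_S A B f J M" unfolding amal_S_def using mf(3) J0 by blast
    show "\<forall>s t. s \<in> amal_S A B f J M \<longrightarrow> t \<in> amal_S A B f J M \<longrightarrow> s \<otimes>\<^bsub>B\<^esub> t \<in> amal_S A B f J M"
    proof (intro allI impI)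
      fix x y assume "x \<in> amal_S A B f J M" "y \<in> amal_S A B f J M"
      then obtain s j t k where h: "s \<in> carrier A - M" "j \<in> J" "x = f s \<oplus>\<^bsub>B\<^esub> j"
        "t \<in> carrier A - M" "k \<in> J" "y = f t \<oplus>\<^bsub>B\<^esub> k" unfolding amal_S_def by blast
      have c: "s \<in> carrier A" "t \<in> carrier A" "j \<in> carrier B" "k \<in> carrier B" using h Jcarr by auto
      have "x \<otimes>\<^bsub>B\<^esub> y = f (s \<otimes> t) \<oplus>\<^bsub>B\<^esub> (f s \<otimes>\<^bsub>B\<^esub> k \<oplus>\<^bsub>B\<^esub> j \<otimes>\<^bsub>B\<^esub> (f t \<oplus>\<^bsub>B\<^esub> k))"
        unfolding h(3,6) using c by (simp add: h.hom_mult, insert c h.hom_closed[OF c(1)] h.hom_closed[OF c(2)], algebra)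
      moreover have "f s \<otimes>\<^bsub>B\<^esub> k \<oplus>\<^bsub>B\<^esub> j \<otimes>\<^bsub>B\<^esub> (f t \<oplus>\<^bsub>B\<^esub> k) \<in> J"
        using J_add J_l J_r h c h.hom_closed by simp
      moreover have "s \<otimes> t \<in> carrier A - M" using primeA[OF M h(1) h(4)] .
      ultimately show "x \<otimes>\<^bsub>B\<^esub> y \<in> amal_S A B f J M" unfolding amal_S_def by blast
    qed
  qed
qed

lemma chS_a:
  assumes M: "maximalideal M A" and ch: "chS D (carrier D - Mp M)"
  shows "chS A (carrier A - M)"
  unfolding chS_def
proof (intro ballI)
  fix a1 a2 assume a: "a1 \<in> carrier A" "a2 \<in> carrier A"
  obtain sg xi where sx: "sg \<in> carrier D - Mp M" "xi \<in> carrier D"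
      "sg \<otimes>\<^bsub>D\<^esub> (a1, f a1) = xi \<otimes>\<^bsub>D\<^esub> (a2, f a2) \<or> sg \<otimes>\<^bsub>D\<^esub> (a2, f a2) = xi \<otimes>\<^bsub>D\<^esub> (a1, f a1)"
    using ch D_fa[OF a(1)] D_fa[OF a(2)] unfolding chS_def by blast
  obtain s1 s2 where s: "s1 \<in> carrier A" "s2 \<in> carrier B" "sg = (s1, s2)" using sx(1) by (blast elim: D_cases2)
  obtain x1 x2 where x: "x1 \<in> carrier A" "x2 \<in> carrier B" "xi = (x1, x2)" using sx(2) by (blast elim: D_cases2)
  have s1M: "s1 \<in> carrier A - M" using sx(1) s unfolding Mp_def by auto
  from sx(3) have "s1 \<otimes> a1 = x1 \<otimes> a2 \<or> s1 \<otimes> a2 = x1 \<otimes> a1" using s x by (auto simp: D_mult)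
  then show "\<exists>s\<in>carrier A - M. \<exists>x\<in>carrier A. s \<otimes> a1 = x \<otimes> a2 \<or> s \<otimes> a2 = x \<otimes> a1"
    using s1M x by blast
qed

lemma chS_b:
  assumes M: "maximalideal M A" and c: "c \<in> carrier A" "f c \<in> J" "c \<notin> M"
    and ch: "chS A (carrier A - M)"
  shows "chS D (carrier D - Mp M)"
  unfolding chS_def
proof (intro ballI)
  fix d1 d2 assume d: "d1 \<in> carrier D" "d2 \<in> carrier D"
  obtain a1 b1 where 1: "a1 \<in> carrier A" "b1 \<in> carrier B" "d1 = (a1, b1)" using d(1) by (blast elim: D_cases2)
  obtain a2 b2 where 2: "a2 \<in> carrier A" "b2 \<in> carrier B" "d2 = (a2, b2)" using d(2) by (blast elim: D_cases2)
  obtain s x where sx: "s \<in> carrier A - M" "x \<in> carrier A" "s \<otimes> a1 = x \<otimes> a2 \<or> s \<otimes> a2 = x \<otimes> a1"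
    using ch 1 2 unfolding chS_def by blast
  have inD: "(c \<otimes> y, \<zero>\<^bsub>B\<^esub>) \<in> carrier D" if y: "y \<in> carrier A" for y
  proof -
    have "\<zero>\<^bsub>B\<^esub> \<ominus>\<^bsub>B\<^esub> f (c \<otimes> y) = \<ominus>\<^bsub>B\<^esub> (f c \<otimes>\<^bsub>B\<^esub> f y)"
      using c y by (simp add: h.hom_mult, insert h.hom_closed[OF c(1)] h.hom_closed[OF y], algebra)
    moreover have "\<ominus>\<^bsub>B\<^esub> (f c \<otimes>\<^bsub>B\<^esub> f y) \<in> J" using J_neg J_r c y h.hom_closed by simp
    ultimately show ?thesis using D_mem c y by simp
  qed
  have csM: "c \<otimes> s \<in> carrier A - M" using primeA[OF M _ sx(1)] c by simp
  then have sig: "(c \<otimes> s, \<zero>\<^bsub>B\<^esub>) \<in> carrier D - Mp M" using inD sx unfolding Mp_def by auto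
  have xi: "(c \<otimes> x, \<zero>\<^bsub>B\<^esub>) \<in> carrier D" using inD sx by simp
  have "(c \<otimes> s, \<zero>\<^bsub>B\<^esub>) \<otimes>\<^bsub>D\<^esub> d1 = (c \<otimes> x, \<zero>\<^bsub>B\<^esub>) \<otimes>\<^bsub>D\<^esub> d2 \<or>
        (c \<otimes> s, \<zero>\<^bsub>B\<^esub>) \<otimes>\<^bsub>D\<^esub> d2 = (c \<otimes> x, \<zero>\<^bsub>B\<^esub>) \<otimes>\<^bsub>D\<^esub> d1"
    using sx 1 2 c by (auto simp: D_mult A.m_assoc)
  then show "\<exists>s\<in>carrier D - Mp M. \<exists>x\<in>carrier D. s \<otimes>\<^bsub>D\<^esub> d1 = x \<otimes>\<^bsub>D\<^esub> d2 \<or> s \<otimes>\<^bsub>D\<^esub> d2 = x \<otimes>\<^bsub>D\<^esub> d1"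
    using sig xi by blast
qed


lemma chS_c_aux:
  assumes M: "maximalideal M A"
    and a: "a1 \<in> carrier A" "j1 \<in> J" "a2 \<in> carrier A" "j2 \<in> J"
    and sx: "s \<in> carrier A - M" "x \<in> carrier A" "s \<otimes> a1 = x \<otimes> a2"
    and u1: "t1 \<in> carrier A - M" "k1 \<in> J" "(f t1 \<oplus>\<^bsub>B\<^esub> k1) \<otimes>\<^bsub>B\<^esub> j1 = \<zero>\<^bsub>B\<^esub>"
    and u2: "t2 \<in> carrier A - M" "k2 \<in> J" "(f t2 \<oplus>\<^bsub>B\<^esub> k2) \<otimes>\<^bsub>B\<^esub> j2 = \<zero>\<^bsub>B\<^esub>"
  shows "\<exists>sg\<in>carrier D - Mp M. \<exists>xi\<in>carrier D.
     sg \<otimes>\<^bsub>D\<^esub> (a1, f a1 \<oplus>\<^bsub>B\<^esub> j1) = xi \<otimes>\<^bsub>D\<^esub> (a2, f a2 \<oplus>\<^bsub>B\<^esub> j2)"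
proof -
  define v1 where "v1 = f t1 \<oplus>\<^bsub>B\<^esub> k1"
  define v2 where "v2 = f t2 \<oplus>\<^bsub>B\<^esub> k2"
  have c: "t1 \<in> carrier A" "t2 \<in> carrier A" "s \<in> carrier A" "j1 \<in> carrier B" "j2 \<in> carrier B"
    "k1 \<in> carrier B" "k2 \<in> carrier B" using u1 u2 sx a Jcarr by auto
  have vc: "v1 \<in> carrier B" "v2 \<in> carrier B" using c h.hom_closed unfolding v1_def v2_def by auto
  have tau1: "(t1, v1) \<in> carrier D" using D_memI[OF c(1) u1(2)] v1_def by simp
  have tau2: "(t2, v2) \<in> carrier D" using D_memI[OF c(2) u2(2)] v2_def by simp
  have sg: "(s, f s) \<otimes>\<^bsub>D\<^esub> ((t1, v1) \<otimes>\<^bsub>D\<^esub> (t2, v2)) \<in> carrier D"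
    using D_fa c tau1 tau2 by simp
  have xi: "(x, f x) \<otimes>\<^bsub>D\<^esub> ((t1, v1) \<otimes>\<^bsub>D\<^esub> (t2, v2)) \<in> carrier D"
    using D_fa sx c tau1 tau2 by simp
  have "s \<otimes> (t1 \<otimes> t2) \<in> carrier A - M" using primeA[OF M sx(1) primeA[OF M u1(1) u2(1)]] .
  then have sgM: "(s, f s) \<otimes>\<^bsub>D\<^esub> ((t1, v1) \<otimes>\<^bsub>D\<^esub> (t2, v2)) \<notin> Mp M" unfolding Mp_def by (simp add: D_mult)
  have e1: "f s \<otimes>\<^bsub>B\<^esub> (v1 \<otimes>\<^bsub>B\<^esub> v2) \<otimes>\<^bsub>B\<^esub> (f a1 \<oplus>\<^bsub>B\<^esub> j1) =
      (v1 \<otimes>\<^bsub>B\<^esub> v2) \<otimes>\<^bsub>B\<^esub> (f s \<otimes>\<^bsub>B\<^esub> f a1) \<oplus>\<^bsub>B\<^esub> (f s \<otimes>\<^bsub>B\<^esub> v2) \<otimes>\<^bsub>B\<^esub> (v1 \<otimes>\<^bsub>B\<^esub> j1)"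
    by (insert vc c a h.hom_closed[OF c(3)] h.hom_closed[OF a(1)], algebra)
  have e2: "f x \<otimes>\<^bsub>B\<^esub> (v1 \<otimes>\<^bsub>B\<^esub> v2) \<otimes>\<^bsub>B\<^esub> (f a2 \<oplus>\<^bsub>B\<^esub> j2) =
      (v1 \<otimes>\<^bsub>B\<^esub> v2) \<otimes>\<^bsub>B\<^esub> (f x \<otimes>\<^bsub>B\<^esub> f a2) \<oplus>\<^bsub>B\<^esub> (f x \<otimes>\<^bsub>B\<^esub> v1) \<otimes>\<^bsub>B\<^esub> (v2 \<otimes>\<^bsub>B\<^esub> j2)"
    by (insert vc c a sx h.hom_closed[OF sx(2)] h.hom_closed[OF a(3)], algebra)
  have z1: "v1 \<otimes>\<^bsub>B\<^esub> j1 = \<zero>\<^bsub>B\<^esub>" using u1 v1_def by simp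
  have z2: "v2 \<otimes>\<^bsub>B\<^esub> j2 = \<zero>\<^bsub>B\<^esub>" using u2 v2_def by simp
  have fe: "f s \<otimes>\<^bsub>B\<^esub> f a1 = f x \<otimes>\<^bsub>B\<^esub> f a2"
  proof -
    have "f s \<otimes>\<^bsub>B\<^esub> f a1 = f (s \<otimes> a1)" using c a by (simp add: h.hom_mult)
    also have "\<dots> = f (x \<otimes> a2)" using sx(3) by simp
    also have "\<dots> = f x \<otimes>\<^bsub>B\<^esub> f a2" using sx a by (simp add: h.hom_mult)
    finally show ?thesis .
  qed
  have "f s \<otimes>\<^bsub>B\<^esub> (v1 \<otimes>\<^bsub>B\<^esub> v2) \<otimes>\<^bsub>B\<^esub> (f a1 \<oplus>\<^bsub>B\<^esub> j1) = f x \<otimes>\<^bsub>B\<^esub> (v1 \<otimes>\<^bsub>B\<^esub> v2) \<otimes>\<^bsub>B\<^esub> (f a2 \<oplus>\<^bsub>B\<^esub> j2)"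
    unfolding e1 e2 z1 z2 fe using vc c a sx h.hom_closed by simp
  moreover have "s \<otimes> (t1 \<otimes> t2) \<otimes> a1 = x \<otimes> (t1 \<otimes> t2) \<otimes> a2"
  proof -
    have "s \<otimes> (t1 \<otimes> t2) \<otimes> a1 = (s \<otimes> a1) \<otimes> (t1 \<otimes> t2)" by (insert c a, algebra)
    also have "\<dots> = (x \<otimes> a2) \<otimes> (t1 \<otimes> t2)" using sx by simp
    also have "\<dots> = x \<otimes> (t1 \<otimes> t2) \<otimes> a2" by (insert c a sx, algebra)
    finally show ?thesis .
  qed
  ultimately have "(s, f s) \<otimes>\<^bsub>D\<^esub> ((t1, v1) \<otimes>\<^bsub>D\<^esub> (t2, v2)) \<otimes>\<^bsub>D\<^esub> (a1, f a1 \<oplus>\<^bsub>B\<^esub> j1) =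
     (x, f x) \<otimes>\<^bsub>D\<^esub> ((t1, v1) \<otimes>\<^bsub>D\<^esub> (t2, v2)) \<otimes>\<^bsub>D\<^esub> (a2, f a2 \<oplus>\<^bsub>B\<^esub> j2)"
    by (simp add: D_mult)
  then show ?thesis using sg sgM xi by blast
qed

lemma chS_c:
  assumes M: "maximalideal M A" and ch: "chS A (carrier A - M)"
    and z: "\<forall>j\<in>J. \<exists>u\<in>amal_S A B f J M. u \<otimes>\<^bsub>B\<^esub> j = \<zero>\<^bsub>B\<^esub>"
  shows "chS D (carrier D - Mp M)"
  unfolding chS_def
proof (intro ballI)
  fix d1 d2 assume d: "d1 \<in> carrier D" "d2 \<in> carrier D"
  obtain a1 j1 where 1: "a1 \<in> carrier A" "j1 \<in> J" "d1 = (a1, f a1 \<oplus>\<^bsub>B\<^esub> j1)" using d(1) by (blast elim: D_cases)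
  obtain a2 j2 where 2: "a2 \<in> carrier A" "j2 \<in> J" "d2 = (a2, f a2 \<oplus>\<^bsub>B\<^esub> j2)" using d(2) by (blast elim: D_cases)
  obtain u1 where u1: "u1 \<in> amal_S A B f J M" "u1 \<otimes>\<^bsub>B\<^esub> j1 = \<zero>\<^bsub>B\<^esub>" using z 1 by blast
  obtain u2 where u2: "u2 \<in> amal_S A B f J M" "u2 \<otimes>\<^bsub>B\<^esub> j2 = \<zero>\<^bsub>B\<^esub>" using z 2 by blast
  obtain t1 k1 where tk1: "t1 \<in> carrier A - M" "k1 \<in> J" "u1 = f t1 \<oplus>\<^bsub>B\<^esub> k1" using u1 unfolding amal_S_def by blast
  obtain t2 k2 where tk2: "t2 \<in> carrier A - M" "k2 \<in> J" "u2 = f t2 \<oplus>\<^bsub>B\<^esub> k2" using u2 unfolding amal_S_def by blast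
  obtain s x where sx: "s \<in> carrier A - M" "x \<in> carrier A" "s \<otimes> a1 = x \<otimes> a2 \<or> s \<otimes> a2 = x \<otimes> a1"
    using ch 1 2 unfolding chS_def by blast
  have z1: "(f t1 \<oplus>\<^bsub>B\<^esub> k1) \<otimes>\<^bsub>B\<^esub> j1 = \<zero>\<^bsub>B\<^esub>" using u1(2) tk1(3) by simp
  have z2: "(f t2 \<oplus>\<^bsub>B\<^esub> k2) \<otimes>\<^bsub>B\<^esub> j2 = \<zero>\<^bsub>B\<^esub>" using u2(2) tk2(3) by simp
  from sx(3) show "\<exists>s\<in>carrier D - Mp M. \<exists>x\<in>carrier D. s \<otimes>\<^bsub>D\<^esub> d1 = x \<otimes>\<^bsub>D\<^esub> d2 \<or> s \<otimes>\<^bsub>D\<^esub> d2 = x \<otimes>\<^bsub>D\<^esub> d1"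
  proof
    assume e: "s \<otimes> a1 = x \<otimes> a2"
    obtain sg xi where "sg \<in> carrier D - Mp M" "xi \<in> carrier D" "sg \<otimes>\<^bsub>D\<^esub> d1 = xi \<otimes>\<^bsub>D\<^esub> d2"
      using chS_c_aux[OF M 1(1,2) 2(1,2) sx(1,2) e tk1(1,2) z1 tk2(1,2) z2] 1(3) 2(3) by blast
    then show ?thesis by blast
  next
    assume e: "s \<otimes> a2 = x \<otimes> a1"
    obtain sg xi where "sg \<in> carrier D - Mp M" "xi \<in> carrier D" "sg \<otimes>\<^bsub>D\<^esub> d2 = xi \<otimes>\<^bsub>D\<^esub> d1"
      using chS_c_aux[OF M 2(1,2) 1(1,2) sx(1,2) e tk2(1,2) z2 tk1(1,2) z1] 1(3) 2(3) by blast
    then show ?thesis by blast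
  qed
qed

end

context amal
begin

lemma S_mem: "s \<in> carrier A - M \<Longrightarrow> f s \<in> amal_S A B f J M"
  unfolding amal_S_def using J0 h.hom_closed[of s] by (intro CollectI exI[of _ s] exI[of _ "\<zero>\<^bsub>B\<^esub>"]) auto

lemma chS_d_aux:
  assumes M: "maximalideal M A" and ch: "chS D (carrier D - Mp M)" and j: "j \<in> J"
    and e: "e \<in> carrier A" "f e \<in> J"
  shows "(\<exists>u\<in>amal_S A B f J M. u \<otimes>\<^bsub>B\<^esub> j = \<zero>\<^bsub>B\<^esub>) \<or> (\<exists>t\<in>carrier A - M. t \<otimes> e = \<zero>)"
proof -
  have d1: "(\<zero>, j) \<in> carrier D" using D_0j j .
  have "\<zero>\<^bsub>B\<^esub> \<ominus>\<^bsub>B\<^esub> f e = \<ominus>\<^bsub>B\<^esub> f e" using e h.hom_closed by (simp add: B.minus_eq)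
  then have d2: "(e, \<zero>\<^bsub>B\<^esub>) \<in> carrier D" using D_mem e J_neg by simp
  obtain sg xi where sx: "sg \<in> carrier D - Mp M" "xi \<in> carrier D"
      "sg \<otimes>\<^bsub>D\<^esub> (\<zero>, j) = xi \<otimes>\<^bsub>D\<^esub> (e, \<zero>\<^bsub>B\<^esub>) \<or> sg \<otimes>\<^bsub>D\<^esub> (e, \<zero>\<^bsub>B\<^esub>) = xi \<otimes>\<^bsub>D\<^esub> (\<zero>, j)"
    using ch d1 d2 unfolding chS_def by blast
  obtain s1 k where s: "s1 \<in> carrier A" "k \<in> J" "sg = (s1, f s1 \<oplus>\<^bsub>B\<^esub> k)" using sx(1) by (blast elim: D_cases)
  obtain x1 x2 where x: "x1 \<in> carrier A" "x2 \<in> carrier B" "xi = (x1, x2)" using sx(2) by (blast elim: D_cases2)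
  have s1M: "s1 \<in> carrier A - M" using sx(1) s unfolding Mp_def by auto
  have uS: "f s1 \<oplus>\<^bsub>B\<^esub> k \<in> amal_S A B f J M" unfolding amal_S_def using s1M s by blast
  from sx(3) show ?thesis
  proof
    assume "sg \<otimes>\<^bsub>D\<^esub> (\<zero>, j) = xi \<otimes>\<^bsub>D\<^esub> (e, \<zero>\<^bsub>B\<^esub>)"
    then have "(f s1 \<oplus>\<^bsub>B\<^esub> k) \<otimes>\<^bsub>B\<^esub> j = \<zero>\<^bsub>B\<^esub>" using s x by (simp add: D_mult)
    then show ?thesis using uS by blast
  next
    assume "sg \<otimes>\<^bsub>D\<^esub> (e, \<zero>\<^bsub>B\<^esub>) = xi \<otimes>\<^bsub>D\<^esub> (\<zero>, j)"
    then have "s1 \<otimes> e = \<zero>" using s x by (simp add: D_mult)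
    then show ?thesis using s1M by blast
  qed
qed

lemma chS_d1:
  assumes M: "maximalideal M A" and ch: "chS D (carrier D - Mp M)"
    and a: "a \<in> carrier A" "f a \<in> J" "\<forall>t\<in>carrier A - M. t \<otimes> a \<noteq> \<zero>" and j: "j \<in> J"
  shows "\<exists>u\<in>amal_S A B f J M. u \<otimes>\<^bsub>B\<^esub> j = \<zero>\<^bsub>B\<^esub>"
  using chS_d_aux[OF M ch j a(1,2)] a(3) by blast

lemma chS_d2:
  assumes M: "maximalideal M A" and ch: "chS D (carrier D - Mp M)" and j: "j \<in> J"
    and a: "a' \<in> carrier A" "s' \<in> carrier A - M" and u: "u \<in> amal_S A B f J M"
    and e: "u \<otimes>\<^bsub>B\<^esub> (j \<otimes>\<^bsub>B\<^esub> f s' \<ominus>\<^bsub>B\<^esub> f a' \<otimes>\<^bsub>B\<^esub> \<one>\<^bsub>B\<^esub>) = \<zero>\<^bsub>B\<^esub>"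
  shows "\<exists>w\<in>amal_S A B f J M. w \<otimes>\<^bsub>B\<^esub> j = \<zero>\<^bsub>B\<^esub>"
proof -
  interpret Sm: msub B "amal_S A B f J M" using S_msub[OF M] .
  obtain t k where tk: "t \<in> carrier A - M" "k \<in> J" "u = f t \<oplus>\<^bsub>B\<^esub> k" using u unfolding amal_S_def by blast
  have c: "t \<in> carrier A" "k \<in> carrier B" "j \<in> carrier B" "s' \<in> carrier A" using tk Jcarr j a by auto
  have fc: "f t \<in> carrier B" "f a' \<in> carrier B" "f s' \<in> carrier B" using c a h.hom_closed by auto
  have uc: "u \<in> carrier B" using tk c fc by simp
  have eq: "u \<otimes>\<^bsub>B\<^esub> f a' = u \<otimes>\<^bsub>B\<^esub> j \<otimes>\<^bsub>B\<^esub> f s'"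
  proof -
    have "u \<otimes>\<^bsub>B\<^esub> j \<otimes>\<^bsub>B\<^esub> f s' = u \<otimes>\<^bsub>B\<^esub> f a' \<oplus>\<^bsub>B\<^esub> u \<otimes>\<^bsub>B\<^esub> (j \<otimes>\<^bsub>B\<^esub> f s' \<ominus>\<^bsub>B\<^esub> f a' \<otimes>\<^bsub>B\<^esub> \<one>\<^bsub>B\<^esub>)"
      by (insert uc c fc, algebra)
    then show ?thesis using e uc fc by simp
  qed
  have fta: "f (t \<otimes> a') \<in> J"
  proof -
    have "f (t \<otimes> a') = u \<otimes>\<^bsub>B\<^esub> f a' \<oplus>\<^bsub>B\<^esub> \<ominus>\<^bsub>B\<^esub> (k \<otimes>\<^bsub>B\<^esub> f a')"
      using c a tk(3) by (simp add: h.hom_mult, insert fc c, algebra)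
    also have "\<dots> = u \<otimes>\<^bsub>B\<^esub> j \<otimes>\<^bsub>B\<^esub> f s' \<oplus>\<^bsub>B\<^esub> \<ominus>\<^bsub>B\<^esub> (k \<otimes>\<^bsub>B\<^esub> f a')" using eq by simp
    also have "\<dots> \<in> J" using J_add J_neg J_r J_l j tk(2) uc fc by simp
    finally show ?thesis .
  qed
  have ta: "t \<otimes> a' \<in> carrier A" using c a by simp
  from chS_d_aux[OF M ch j ta fta] show ?thesis
  proof
    assume "\<exists>u\<in>amal_S A B f J M. u \<otimes>\<^bsub>B\<^esub> j = \<zero>\<^bsub>B\<^esub>" then show ?thesis .
  next
    assume "\<exists>t'\<in>carrier A - M. t' \<otimes> (t \<otimes> a') = \<zero>"
    then obtain s1 where s1: "s1 \<in> carrier A - M" "s1 \<otimes> (t \<otimes> a') = \<zero>" by blast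
    have s1c: "s1 \<in> carrier A" using s1 by simp
    have st: "s1 \<otimes> t \<in> carrier A - M" using primeA[OF M s1(1) tk(1)] .
    define w where "w = f (s1 \<otimes> t) \<otimes>\<^bsub>B\<^esub> u \<otimes>\<^bsub>B\<^esub> f s'"
    have wS: "w \<in> amal_S A B f J M" unfolding w_def
      using Sm.S_mult[OF Sm.S_mult[OF S_mem[OF st] u] S_mem[OF a(2)]] .
    have "w \<otimes>\<^bsub>B\<^esub> j = f (s1 \<otimes> t) \<otimes>\<^bsub>B\<^esub> (u \<otimes>\<^bsub>B\<^esub> j \<otimes>\<^bsub>B\<^esub> f s')"
      unfolding w_def using s1c c by (simp add: h.hom_mult, insert fc uc h.hom_closed[OF s1c], algebra)
    also have "\<dots> = f (s1 \<otimes> t) \<otimes>\<^bsub>B\<^esub> (u \<otimes>\<^bsub>B\<^esub> f a')" using eq by simp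
    also have "\<dots> = u \<otimes>\<^bsub>B\<^esub> f (s1 \<otimes> (t \<otimes> a'))"
      using s1c c a by (simp add: h.hom_mult, insert fc uc h.hom_closed[OF s1c], algebra)
    also have "\<dots> = \<zero>\<^bsub>B\<^esub>" using s1(2) uc by simp
    finally show ?thesis using wS by blast
  qed
qed

lemma chS_e:
  assumes N: "maximalideal N B" and j0: "j0 \<in> J" "j0 \<notin> N"
  shows "chS D (carrier D - Np N) \<longleftrightarrow> chS B (carrier B - N)"
proof
  have j0c: "j0 \<in> carrier B" using Jcarr j0 by simp
  assume ch: "chS D (carrier D - Np N)"
  show "chS B (carrier B - N)" unfolding chS_def
  proof (intro ballI)
    fix y z assume yz: "y \<in> carrier B" "z \<in> carrier B"
    have d: "(\<zero>, y \<otimes>\<^bsub>B\<^esub> j0) \<in> carrier D" "(\<zero>, z \<otimes>\<^bsub>B\<^esub> j0) \<in> carrier D" using D_0j J_l j0 yz by auto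
    obtain sg xi where sx: "sg \<in> carrier D - Np N" "xi \<in> carrier D"
      "sg \<otimes>\<^bsub>D\<^esub> (\<zero>, y \<otimes>\<^bsub>B\<^esub> j0) = xi \<otimes>\<^bsub>D\<^esub> (\<zero>, z \<otimes>\<^bsub>B\<^esub> j0) \<or>
       sg \<otimes>\<^bsub>D\<^esub> (\<zero>, z \<otimes>\<^bsub>B\<^esub> j0) = xi \<otimes>\<^bsub>D\<^esub> (\<zero>, y \<otimes>\<^bsub>B\<^esub> j0)"
      using ch d unfolding chS_def by blast
    obtain s1 s2 where s: "s1 \<in> carrier A" "s2 \<in> carrier B" "sg = (s1, s2)" using sx(1) by (blast elim: D_cases2)
    obtain x1 x2 where x: "x1 \<in> carrier A" "x2 \<in> carrier B" "xi = (x1, x2)" using sx(2) by (blast elim: D_cases2)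
    have s2N: "s2 \<in> carrier B - N" using sx(1) s unfolding Np_def by auto
    have w: "s2 \<otimes>\<^bsub>B\<^esub> j0 \<in> carrier B - N" using primeB[OF N s2N] j0 j0c by simp
    have xw: "x2 \<otimes>\<^bsub>B\<^esub> j0 \<in> carrier B" using x j0c by simp
    from sx(3) show "\<exists>s\<in>carrier B - N. \<exists>x\<in>carrier B. s \<otimes>\<^bsub>B\<^esub> y = x \<otimes>\<^bsub>B\<^esub> z \<or> s \<otimes>\<^bsub>B\<^esub> z = x \<otimes>\<^bsub>B\<^esub> y"
    proof
      assume "sg \<otimes>\<^bsub>D\<^esub> (\<zero>, y \<otimes>\<^bsub>B\<^esub> j0) = xi \<otimes>\<^bsub>D\<^esub> (\<zero>, z \<otimes>\<^bsub>B\<^esub> j0)"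
      then have "s2 \<otimes>\<^bsub>B\<^esub> (y \<otimes>\<^bsub>B\<^esub> j0) = x2 \<otimes>\<^bsub>B\<^esub> (z \<otimes>\<^bsub>B\<^esub> j0)" using s x by (simp add: D_mult)
      moreover have "s2 \<otimes>\<^bsub>B\<^esub> (y \<otimes>\<^bsub>B\<^esub> j0) = (s2 \<otimes>\<^bsub>B\<^esub> j0) \<otimes>\<^bsub>B\<^esub> y" by (insert s x yz j0c, algebra)
      moreover have "x2 \<otimes>\<^bsub>B\<^esub> (z \<otimes>\<^bsub>B\<^esub> j0) = (x2 \<otimes>\<^bsub>B\<^esub> j0) \<otimes>\<^bsub>B\<^esub> z" by (insert s x yz j0c, algebra)
      ultimately show ?thesis using w xw by auto
    next
      assume "sg \<otimes>\<^bsub>D\<^esub> (\<zero>, z \<otimes>\<^bsub>B\<^esub> j0) = xi \<otimes>\<^bsub>D\<^esub> (\<zero>, y \<otimes>\<^bsub>B\<^esub> j0)"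
      then have "s2 \<otimes>\<^bsub>B\<^esub> (z \<otimes>\<^bsub>B\<^esub> j0) = x2 \<otimes>\<^bsub>B\<^esub> (y \<otimes>\<^bsub>B\<^esub> j0)" using s x by (simp add: D_mult)
      moreover have "s2 \<otimes>\<^bsub>B\<^esub> (z \<otimes>\<^bsub>B\<^esub> j0) = (s2 \<otimes>\<^bsub>B\<^esub> j0) \<otimes>\<^bsub>B\<^esub> z" by (insert s x yz j0c, algebra)
      moreover have "x2 \<otimes>\<^bsub>B\<^esub> (y \<otimes>\<^bsub>B\<^esub> j0) = (x2 \<otimes>\<^bsub>B\<^esub> j0) \<otimes>\<^bsub>B\<^esub> y" by (insert s x yz j0c, algebra)
      ultimately show ?thesis using w xw by auto
    qed
  qed
next
  have j0c: "j0 \<in> carrier B" using Jcarr j0 by simp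
  assume ch: "chS B (carrier B - N)"
  show "chS D (carrier D - Np N)" unfolding chS_def
  proof (intro ballI)
    fix d1 d2 assume d: "d1 \<in> carrier D" "d2 \<in> carrier D"
    obtain a1 b1 where 1: "a1 \<in> carrier A" "b1 \<in> carrier B" "d1 = (a1, b1)" using d(1) by (blast elim: D_cases2)
    obtain a2 b2 where 2: "a2 \<in> carrier A" "b2 \<in> carrier B" "d2 = (a2, b2)" using d(2) by (blast elim: D_cases2)
    obtain s x where sx: "s \<in> carrier B - N" "x \<in> carrier B" "s \<otimes>\<^bsub>B\<^esub> b1 = x \<otimes>\<^bsub>B\<^esub> b2 \<or> s \<otimes>\<^bsub>B\<^esub> b2 = x \<otimes>\<^bsub>B\<^esub> b1"
      using ch 1 2 unfolding chS_def by blast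
    have sg: "(\<zero>, j0 \<otimes>\<^bsub>B\<^esub> s) \<in> carrier D - Np N"
      using D_0j J_r j0 sx primeB[OF N _ sx(1)] j0c unfolding Np_def by auto
    have xi: "(\<zero>, j0 \<otimes>\<^bsub>B\<^esub> x) \<in> carrier D" using D_0j J_r j0 sx by simp
    have "(\<zero>, j0 \<otimes>\<^bsub>B\<^esub> s) \<otimes>\<^bsub>D\<^esub> d1 = (\<zero>, j0 \<otimes>\<^bsub>B\<^esub> x) \<otimes>\<^bsub>D\<^esub> d2 \<or>
          (\<zero>, j0 \<otimes>\<^bsub>B\<^esub> s) \<otimes>\<^bsub>D\<^esub> d2 = (\<zero>, j0 \<otimes>\<^bsub>B\<^esub> x) \<otimes>\<^bsub>D\<^esub> d1"
      using sx 1 2 j0c by (auto simp: D_mult B.m_assoc)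
    then show "\<exists>s\<in>carrier D - Np N. \<exists>x\<in>carrier D. s \<otimes>\<^bsub>D\<^esub> d1 = x \<otimes>\<^bsub>D\<^esub> d2 \<or> s \<otimes>\<^bsub>D\<^esub> d2 = x \<otimes>\<^bsub>D\<^esub> d1"
      using sg xi by blast
  qed
qed

end

context amal
begin

lemma main:
  assumes hyp: "\<And>M. maximalideal M A \<Longrightarrow> {a \<in> carrier A. f a \<in> J} \<subseteq> M \<Longrightarrow>
       (loc_map B (amal_S A B f J M) f ` carrier (loc_at A M)
                  = carrier (localization B (amal_S A B f J M)))
       \<or> loc_ext A (carrier A - M) {a \<in> carrier A. f a \<in> J} \<noteq> {\<zero>\<^bsub>loc_at A M\<^esub>}"
  shows "arithmetical (amalgamation A B f J) \<longleftrightarrow>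
           (arithmetical A
            \<and> (\<forall>M. maximalideal M A \<and> {a \<in> carrier A. f a \<in> J} \<subseteq> M \<longrightarrow>
                 loc_ext B (amal_S A B f J M) J = {\<zero>\<^bsub>localization B (amal_S A B f J M)\<^esub>})
            \<and> (\<forall>N. maximalideal N B \<and> \<not> J \<subseteq> N \<longrightarrow>
                 (\<forall>I1 I2. ideal I1 (loc_at B N) \<and> ideal I2 (loc_at B N) \<longrightarrow>
                      I1 \<subseteq> I2 \<or> I2 \<subseteq> I1)))"
proof
  assume ar: "arithmetical (amalgamation A B f J)"
  have chD: "\<And>P. maximalideal P D \<Longrightarrow> chS D (carrier D - P)"
    using arith_imp_chS[OF D_cring ar] by blast
  have arA: "arithmetical A"
  proof (rule chS_imp_arith[OF A.is_cring])
    fix M assume M: "maximalideal M A"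
    show "chS A (carrier A - M)" using chS_a[OF M chD[OF Mp_max[OF M]]] .
  qed
  have part2: "loc_ext B (amal_S A B f J M) J = {\<zero>\<^bsub>localization B (amal_S A B f J M)\<^esub>}"
    if M: "maximalideal M A" and IM: "{a \<in> carrier A. f a \<in> J} \<subseteq> M" for M
  proof -
    interpret Sm: msub B "amal_S A B f J M" using S_msub[OF M] .
    interpret mA: mloc A M using M by (simp add: mloc_def mloc_axioms_def A.is_cring)
    have ch: "chS D (carrier D - Mp M)" using chD[OF Mp_max[OF M]] .
    have "\<forall>j\<in>J. \<exists>u\<in>amal_S A B f J M. u \<otimes>\<^bsub>B\<^esub> j = \<zero>\<^bsub>B\<^esub>"
    proof
      fix j assume j: "j \<in> J"
      have jc: "j \<in> carrier B" using Jcarr j .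
      from hyp[OF M IM] show "\<exists>u\<in>amal_S A B f J M. u \<otimes>\<^bsub>B\<^esub> j = \<zero>\<^bsub>B\<^esub>"
      proof
        assume surj: "loc_map B (amal_S A B f J M) f ` carrier (loc_at A M)
                  = carrier (localization B (amal_S A B f J M))"
        have "loc_can B (amal_S A B f J M) j \<in> carrier (localization B (amal_S A B f J M))"
          using Sm.can_closed[OF jc] .
        then obtain U where U: "U \<in> carrier (loc_at A M)"
          "loc_can B (amal_S A B f J M) j = loc_map B (amal_S A B f J M) f U"
          using surj by (metis imageE)
        obtain a s where as: "a \<in> carrier A" "s \<in> carrier A - M" "U = loc_frac A (carrier A - M) a s"
          using U(1) by (rule mA.L_cases)
        define a' where "a' = fst (loc_rep U)"
        define s' where "s' = snd (loc_rep U)"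
        have as': "a' \<in> carrier A" "s' \<in> carrier A - M"
          using mA.rep_props(1,2)[OF as(1,2)] as(3) a'_def s'_def by auto
        have fS: "f s' \<in> amal_S A B f J M" using S_mem[OF as'(2)] .
        have fa: "f a' \<in> carrier B" using h.hom_closed as' by simp
        have "loc_frac B (amal_S A B f J M) j \<one>\<^bsub>B\<^esub> = loc_frac B (amal_S A B f J M) (f a') (f s')"
          using U(2) Sm.can_eq unfolding loc_map_def a'_def s'_def by simp
        then obtain u where u: "u \<in> amal_S A B f J M"
            "u \<otimes>\<^bsub>B\<^esub> (j \<otimes>\<^bsub>B\<^esub> f s' \<ominus>\<^bsub>B\<^esub> f a' \<otimes>\<^bsub>B\<^esub> \<one>\<^bsub>B\<^esub>) = \<zero>\<^bsub>B\<^esub>"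
          using Sm.frac_eq[OF jc Sm.one_S fa fS] by blast
        show ?thesis using chS_d2[OF M ch j as' u] .
      next
        assume nz: "loc_ext A (carrier A - M) {a \<in> carrier A. f a \<in> J} \<noteq> {\<zero>\<^bsub>loc_at A M\<^esub>}"
        have sub: "{a \<in> carrier A. f a \<in> J} \<subseteq> carrier A" by blast
        have "\<not> (\<forall>i\<in>{a \<in> carrier A. f a \<in> J}. \<exists>u\<in>carrier A - M. u \<otimes> i = \<zero>)"
        proof
          assume hh: "\<forall>i\<in>{a \<in> carrier A. f a \<in> J}. \<exists>u\<in>carrier A - M. u \<otimes> i = \<zero>"
          have "loc_ext A (carrier A - M) {a \<in> carrier A. f a \<in> J} = {\<zero>\<^bsub>loc_at A M\<^esub>}"
            by (rule iffD2[OF mA.loc_ext_zero_iff[OF sub] hh])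
          then show False using nz by simp
        qed
        then obtain a where a: "a \<in> carrier A" "f a \<in> J" "\<forall>t\<in>carrier A - M. t \<otimes> a \<noteq> \<zero>" by blast
        show ?thesis using chS_d1[OF M ch a j] .
      qed
    qed
    then show ?thesis by (rule iffD2[OF Sm.loc_ext_zero_iff[OF Jc]])
  qed
  have part3: "\<forall>I1 I2. ideal I1 (loc_at B N) \<and> ideal I2 (loc_at B N) \<longrightarrow> I1 \<subseteq> I2 \<or> I2 \<subseteq> I1"
    if N: "maximalideal N B" and JN: "\<not> J \<subseteq> N" for N
  proof -
    interpret mB: mloc B N using N by (simp add: mloc_def mloc_axioms_def B.is_cring)
    obtain j0 where j0: "j0 \<in> J" "j0 \<notin> N" using JN by blast
    have c: "chS B (carrier B - N)" using iffD1[OF chS_e[OF N j0] chD[OF Np_max[OF N j0]]] .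
    show ?thesis by (rule iffD2[OF mB.chained_iff c])
  qed
  show "arithmetical A
            \<and> (\<forall>M. maximalideal M A \<and> {a \<in> carrier A. f a \<in> J} \<subseteq> M \<longrightarrow>
                 loc_ext B (amal_S A B f J M) J = {\<zero>\<^bsub>localization B (amal_S A B f J M)\<^esub>})
            \<and> (\<forall>N. maximalideal N B \<and> \<not> J \<subseteq> N \<longrightarrow>
                 (\<forall>I1 I2. ideal I1 (loc_at B N) \<and> ideal I2 (loc_at B N) \<longrightarrow>
                      I1 \<subseteq> I2 \<or> I2 \<subseteq> I1))"
    using arA part2 part3 by blast
next
  assume h2: "arithmetical A
            \<and> (\<forall>M. maximalideal M A \<and> {a \<in> carrier A. f a \<in> J} \<subseteq> M \<longrightarrow>
                 loc_ext B (amal_S A B f J M) J = {\<zero>\<^bsub>localization B (amal_S A B f J M)\<^esub>})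
            \<and> (\<forall>N. maximalideal N B \<and> \<not> J \<subseteq> N \<longrightarrow>
                 (\<forall>I1 I2. ideal I1 (loc_at B N) \<and> ideal I2 (loc_at B N) \<longrightarrow>
                      I1 \<subseteq> I2 \<or> I2 \<subseteq> I1))"
  then have arA: "arithmetical A"
    and z: "\<And>M. maximalideal M A \<Longrightarrow> {a \<in> carrier A. f a \<in> J} \<subseteq> M \<Longrightarrow>
                 loc_ext B (amal_S A B f J M) J = {\<zero>\<^bsub>localization B (amal_S A B f J M)\<^esub>}"
    and ch3: "\<And>N. maximalideal N B \<Longrightarrow> \<not> J \<subseteq> N \<Longrightarrow>
                 (\<forall>I1 I2. ideal I1 (loc_at B N) \<and> ideal I2 (loc_at B N) \<longrightarrow>
                      I1 \<subseteq> I2 \<or> I2 \<subseteq> I1)"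
    by simp_all
  show "arithmetical (amalgamation A B f J)"
  proof (rule chS_imp_arith[OF D_cring])
    fix P assume P: "maximalideal P D"
    from max_class[OF P] show "chS D (carrier D - P)"
    proof
      assume "\<exists>M. maximalideal M A \<and> P = Mp M"
      then obtain M where M: "maximalideal M A" "P = Mp M" by blast
      have chA: "chS A (carrier A - M)" using arith_imp_chS[OF A.is_cring arA M(1)] .
      show ?thesis
      proof (cases "{a \<in> carrier A. f a \<in> J} \<subseteq> M")
        case True
        interpret Sm: msub B "amal_S A B f J M" using S_msub[OF M(1)] .
        have "\<forall>j\<in>J. \<exists>u\<in>amal_S A B f J M. u \<otimes>\<^bsub>B\<^esub> j = \<zero>\<^bsub>B\<^esub>"
          by (rule iffD1[OF Sm.loc_ext_zero_iff[OF Jc] z[OF M(1) True]])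
        then show ?thesis using chS_c[OF M(1) chA] M(2) by simp
      next
        case False
        then obtain c where c: "c \<in> carrier A" "f c \<in> J" "c \<notin> M" by blast
        show ?thesis using chS_b[OF M(1) c chA] M(2) by simp
      qed
    next
      assume "\<exists>N. maximalideal N B \<and> \<not> J \<subseteq> N \<and> P = Np N"
      then obtain N where N: "maximalideal N B" "\<not> J \<subseteq> N" "P = Np N" by blast
      interpret mB: mloc B N using N(1) by (simp add: mloc_def mloc_axioms_def B.is_cring)
      obtain j0 where j0: "j0 \<in> J" "j0 \<notin> N" using N(2) by blast
      have "chS B (carrier B - N)" using iffD1[OF mB.chained_iff ch3[OF N(1,2)]] .
      then have "chS D (carrier D - Np N)" using iffD2[OF chS_e[OF N(1) j0]] by blast
      then show ?thesis using N(3) by simp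
    qed
  qed
qed

end

theorem proposition4p10:
  fixes A :: "('a, 'm) ring_scheme" and B :: "('b, 'n) ring_scheme"
    and f :: "'a \<Rightarrow> 'b" and J :: "'b set"
  assumes "cring A" and "cring B"
    and "f \<in> ring_hom A B"
    and "ideal J B"
    and hyp: "\<And>M. maximalideal M A \<Longrightarrow> {a \<in> carrier A. f a \<in> J} \<subseteq> M \<Longrightarrow>
       (loc_map B (amal_S A B f J M) f ` carrier (loc_at A M)
                  = carrier (localization B (amal_S A B f J M)))
       \<or> loc_ext A (carrier A - M) {a \<in> carrier A. f a \<in> J} \<noteq> {\<zero>\<^bsub>loc_at A M\<^esub>}"
  shows "arithmetical (amalgamation A B f J) \<longleftrightarrow>
           (arithmetical A
            \<and> (\<forall>M. maximalideal M A \<and> {a \<in> carrier A. f a \<in> J} \<subseteq> M \<longrightarrow>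
                 loc_ext B (amal_S A B f J M) J = {\<zero>\<^bsub>localization B (amal_S A B f J M)\<^esub>})
            \<and> (\<forall>N. maximalideal N B \<and> \<not> J \<subseteq> N \<longrightarrow>
                 (\<forall>I1 I2. ideal I1 (loc_at B N) \<and> ideal I2 (loc_at B N) \<longrightarrow>
                      I1 \<subseteq> I2 \<or> I2 \<subseteq> I1)))"
proof -
  interpret amal A B f J using assms(1-4) by (simp add: amal_def amal_axioms_def)
  show ?thesis using main[OF hyp] .
qed

end
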